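(* Let $n\ge2$, let $I\subseteq[0,\infty)$ be an interval with non-empty interior, let $\tilde{\mathbf{P}}$ be a generalized $n$-system on $I$, and let $D$ be a discrete subset of $I$. Then there exists an $n$-system $\mathbf{P}$ on $I$ such that $\mathbf{P}(t)=\tilde{\mathbf{P}}(t)$ for every $t\in D$.
   Context: Let $I\subseteq[0,\infty)$ be an interval with non-empty interior. A map $\mathbf{P}\colon I\to\mathbb{R}^n$ is continuous piecewise linear if it is continuous, the set $D$ of points of $I$ where it is not differentiable (including the endpoints of $I$ that lie in $I$) is discrete in $I$, and its derivative is locally constant on $I\setminus D$. An $n$-system on $I$ is a continuous piecewise linear map $\mathbf{P}=(P_1,\dots,P_n)\colon I\to\mathbb{R}^n$ such that: (S1) for each $q\in I$, $0\le P_1(q)\le\cdots\le P_n(q)$ and $P_1(q)+\cdots+P_n(q)=q$; (S2) on each non-empty open subinterval $H$ of $I$ on which $\mathbf{P}$ is differentiable, there is $r\in\{1,\dots,n\}$ such that $P_r$ has slope $1$ on $H$ and all $P_j$ with $j\ne r$ are constant on $H$; (S3) if $q$ is an interior point of $I$ where $\mathbf{P}$ is not differentiable and the integers $r,s$ with $P_r'(q^-)=P_s'(q^+)=1$ satisfy $r<s$, then $P_r(q)=P_{r+1}(q)=\cdots=P_s(q)$. A generalized $n$-system on $I$ is a continuous piecewise linear map $\mathbf{P}=(P_1,\dots,P_n)\colon I\to\mathbb{R}^n$ such that: (G1) for each $q\in I$, $0\le P_1(q)\le\cdots\le P_n(q)$ and $P_1(q)+\cdots+P_n(q)=q$; (G2)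 on each non-empty open subinterval $H$ of $I$ on which $\mathbf{P}$ is differentiable, there are integers $1\le \underline{r}\le\overline{r}\le n$ such that $P_{\underline r},\dots,P_{\overline r}$ coincide on $H$ and have slope $1/(\overline r-\underline r+1)$, while every other $P_j$ is constant on $H$; (G3) if $q$ is an interior point of $I$ where $\mathbf{P}$ is not differentiable, and $\underline r,\overline r,\underline s,\overline s$ are the integers with $P_j'(q^-)=1/(\overline r-\underline r+1)$ for $\underline r\le j\le\overline r$ and $P_j'(q^+)=1/(\overline s-\underline s+1)$ for $\underline s\le j\le \overline s$ (as in (G2) on the adjacent intervals), and if $\underline r<\overline s$, then $P_{\underline r}(q)=P_{\underline r+1}(q)=\cdots=P_{\overline s}(q)$. *)

theory Defs
  imports "HOL-Analysis.Analysis"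
begin

text \<open>Maps I -> R^n are represented as P :: real => nat => real, the
  j-th coordinate at q being P q j for j in {1..n}; values outside I and
  indices outside {1..n} are irrelevant.\<close>

definition discrete_in :: "real set \<Rightarrow> real set \<Rightarrow> bool" where
  "discrete_in D I \<longleftrightarrow> (\<forall>x\<in>I. \<exists>e>0. finite (D \<inter> ball x e))"

definition comp :: "(real \<Rightarrow> nat \<Rightarrow> real) \<Rightarrow> nat \<Rightarrow> real \<Rightarrow> real" where
  "comp P j = (\<lambda>t. P t j)"

definition nondiff_set :: "nat \<Rightarrow> real set \<Rightarrow> (real \<Rightarrow> nat \<Rightarrow> real) \<Rightarrow> real set" where
  "nondiff_set n I P = {q\<in>I. q \<in> frontier I \<or> \<not> (\<forall>j\<in>{1..n}. comp P j differentiable (at q))}"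

definition cont_pw_linear :: "nat \<Rightarrow> real set \<Rightarrow> (real \<Rightarrow> nat \<Rightarrow> real) \<Rightarrow> bool" where
  "cont_pw_linear n I P \<longleftrightarrow>
     (\<forall>j\<in>{1..n}. continuous_on I (comp P j)) \<and>
     discrete_in (nondiff_set n I P) I \<and>
     (\<forall>q\<in>I - nondiff_set n I P. \<exists>e>0. \<forall>x\<in>ball q e \<inter> I. x \<notin> nondiff_set n I P \<longrightarrow>
        (\<forall>j\<in>{1..n}. deriv (comp P j) x = deriv (comp P j) q))"

definition ordered_sum :: "nat \<Rightarrow> real set \<Rightarrow> (real \<Rightarrow> nat \<Rightarrow> real) \<Rightarrow> bool" where
  "ordered_sum n I P \<longleftrightarrow>
     (\<forall>q\<in>I. 0 \<le> P q 1 \<and> (\<forall>j\<in>{1..<n}. P q j \<le> P q (Suc j)) \<and> (\<Sum>j=1..n. P q j) = q)"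

definition diff_subinterval :: "nat \<Rightarrow> real set \<Rightarrow> (real \<Rightarrow> nat \<Rightarrow> real) \<Rightarrow> real set \<Rightarrow> bool" where
  "diff_subinterval n I P H \<longleftrightarrow> is_interval H \<and> open H \<and> H \<noteq> {} \<and> H \<subseteq> I \<and>
     (\<forall>q\<in>H. \<forall>j\<in>{1..n}. comp P j differentiable (at q))"

definition n_system :: "nat \<Rightarrow> real set \<Rightarrow> (real \<Rightarrow> nat \<Rightarrow> real) \<Rightarrow> bool" where
  "n_system n I P \<longleftrightarrow> cont_pw_linear n I P \<and> ordered_sum n I P \<and>
     (\<forall>H. diff_subinterval n I P H \<longrightarrow>
        (\<exists>r\<in>{1..n}. (\<forall>x\<in>H. \<forall>y\<in>H. P y r - P x r = y - x) \<and>
                    (\<forall>j\<in>{1..n}. j \<noteq> r \<longrightarrow> (\<forall>x\<in>H. \<forall>y\<in>H. P y j = P x j)))) \<and>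
     (\<forall>q\<in>interior I. q \<in> nondiff_set n I P \<longrightarrow>
        (\<forall>r\<in>{1..n}. \<forall>s\<in>{1..n}.
           (comp P r has_real_derivative 1) (at_left q) \<longrightarrow>
           (comp P s has_real_derivative 1) (at_right q) \<longrightarrow> r < s \<longrightarrow>
           (\<forall>j\<in>{r..s}. P q j = P q r)))"

definition gen_n_system :: "nat \<Rightarrow> real set \<Rightarrow> (real \<Rightarrow> nat \<Rightarrow> real) \<Rightarrow> bool" where
  "gen_n_system n I P \<longleftrightarrow> cont_pw_linear n I P \<and> ordered_sum n I P \<and>
     (\<forall>H. diff_subinterval n I P H \<longrightarrow>
        (\<exists>lr ur. 1 \<le> lr \<and> lr \<le> ur \<and> ur \<le> n \<and>
           (\<forall>j\<in>{lr..ur}. \<forall>x\<in>H. P x j = P x lr) \<and>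
           (\<forall>j\<in>{lr..ur}. \<forall>x\<in>H. \<forall>y\<in>H. P y j - P x j = (y - x) / real (ur - lr + 1)) \<and>
           (\<forall>j\<in>{1..n}. j \<notin> {lr..ur} \<longrightarrow> (\<forall>x\<in>H. \<forall>y\<in>H. P y j = P x j)))) \<and>
     (\<forall>q\<in>interior I. q \<in> nondiff_set n I P \<longrightarrow>
        (\<forall>lr ur ls us. 1 \<le> lr \<longrightarrow> lr \<le> ur \<longrightarrow> ur \<le> n \<longrightarrow> 1 \<le> ls \<longrightarrow> ls \<le> us \<longrightarrow> us \<le> n \<longrightarrow>
           (\<forall>j\<in>{lr..ur}. (comp P j has_real_derivative 1 / real (ur - lr + 1)) (at_left q)) \<longrightarrow>
           (\<forall>j\<in>{ls..us}. (comp P j has_real_derivative 1 / real (us - ls + 1)) (at_right q)) \<longrightarrow>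
           lr < us \<longrightarrow> (\<forall>j\<in>{lr..us}. P q j = P q lr)))"

end

theory Submission
  imports Defs
begin

definition leftaff :: "nat \<Rightarrow> real set \<Rightarrow> (real \<Rightarrow> nat \<Rightarrow> real) \<Rightarrow> real \<Rightarrow> nat \<Rightarrow> bool" where
  "leftaff n I P x r \<longleftrightarrow> r \<in> {1..n} \<and> (\<exists>e>0. \<forall>y. x - e < y \<and> y \<le> x \<longrightarrow> y \<in> I \<and>
      (\<forall>j\<in>{1..n}. P y j = P x j + (if j = r then y - x else 0)))"

definition rightaff :: "nat \<Rightarrow> real set \<Rightarrow> (real \<Rightarrow> nat \<Rightarrow> real) \<Rightarrow> real \<Rightarrow> nat \<Rightarrow> bool" where
  "rightaff n I P x r \<longleftrightarrow> r \<in> {1..n} \<and> (\<exists>e>0. \<forall>y. x \<le> y \<and> y < x + e \<longrightarrow> y \<in> I \<and>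
      (\<forall>j\<in>{1..n}. P y j = P x j + (if j = r then y - x else 0)))"

lemma affine_deriv_open:
  fixes f :: "real \<Rightarrow> real"
  assumes "open S" "y \<in> S" "\<And>z. z \<in> S \<Longrightarrow> f z = c + (z - x) * d"
  shows "(f has_real_derivative d) (at y)"
proof -
  have "((\<lambda>z. c + (z - x) * d) has_real_derivative d) (at y)"
    by (auto intro!: derivative_eq_intros)
  then show ?thesis
    by (rule has_field_derivative_transform_within_open[OF _ assms(1,2)]) (use assms(3) in auto)
qed

lemma left_deriv_unique:
  fixes f :: "real \<Rightarrow> real"
  assumes "e > 0" "\<And>y. x - e < y \<Longrightarrow> y < x \<Longrightarrow> f y = f x + (y - x) * d"
    and "(f has_real_derivative D) (at_left x)"
  shows "D = d"
proof -
  have 1: "((\<lambda>y. (f y - f x) / (y - x)) \<longlongrightarrow> D) (at_left x)"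
    using assms(3) has_field_derivative_iff by blast
  have "eventually (\<lambda>y. y \<in> {x - e<..<x}) (at_left x)"
    using eventually_at_left_real assms(1) by simp
  then have "eventually (\<lambda>y. (f y - f x) / (y - x) = d) (at_left x)"
    by (rule eventually_mono) (use assms(2) in auto)
  then have "((\<lambda>y. (f y - f x) / (y - x)) \<longlongrightarrow> d) (at_left x)"
    by (rule tendsto_eventually)
  then show ?thesis using 1 tendsto_unique trivial_limit_at_left_real by blast
qed

lemma right_deriv_unique:
  fixes f :: "real \<Rightarrow> real"
  assumes "e > 0" "\<And>y. x < y \<Longrightarrow> y < x + e \<Longrightarrow> f y = f x + (y - x) * d"
    and "(f has_real_derivative D) (at_right x)"
  shows "D = d"
proof -
  have 1: "((\<lambda>y. (f y - f x) / (y - x)) \<longlongrightarrow> D) (at_right x)"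
    using assms(3) has_field_derivative_iff by blast
  have "eventually (\<lambda>y. y \<in> {x<..<x + e}) (at_right x)"
    using eventually_at_right_real assms(1) by simp
  then have "eventually (\<lambda>y. (f y - f x) / (y - x) = d) (at_right x)"
    by (rule eventually_mono) (use assms(2) in auto)
  then have "((\<lambda>y. (f y - f x) / (y - x)) \<longlongrightarrow> d) (at_right x)"
    by (rule tendsto_eventually)
  then show ?thesis using 1 tendsto_unique trivial_limit_at_right_real by blast
qed

lemma left_deriv_affine:
  fixes f :: "real \<Rightarrow> real"
  assumes "e > 0" "\<And>y. x - e < y \<Longrightarrow> y < x \<Longrightarrow> f y = f x + (y - x) * d"
  shows "(f has_real_derivative d) (at_left x)"
proof -
  have "eventually (\<lambda>y. y \<in> {x - e<..<x}) (at_left x)"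
    using eventually_at_left_real assms(1) by simp
  then have "eventually (\<lambda>y. (f y - f x) / (y - x) = d) (at_left x)"
    by (rule eventually_mono) (use assms(2) in auto)
  then have "((\<lambda>y. (f y - f x) / (y - x)) \<longlongrightarrow> d) (at_left x)"
    by (rule tendsto_eventually)
  then show ?thesis unfolding has_field_derivative_iff .
qed

lemma right_deriv_affine:
  fixes f :: "real \<Rightarrow> real"
  assumes "e > 0" "\<And>y. x < y \<Longrightarrow> y < x + e \<Longrightarrow> f y = f x + (y - x) * d"
  shows "(f has_real_derivative d) (at_right x)"
proof -
  have "eventually (\<lambda>y. y \<in> {x<..<x + e}) (at_right x)"
    using eventually_at_right_real assms(1) by simp
  then have "eventually (\<lambda>y. (f y - f x) / (y - x) = d) (at_right x)"
    by (rule eventually_mono) (use assms(2) in auto)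
  then have "((\<lambda>y. (f y - f x) / (y - x)) \<longlongrightarrow> d) (at_right x)"
    by (rule tendsto_eventually)
  then show ?thesis unfolding has_field_derivative_iff .
qed

lemma leftaffD:
  assumes "leftaff n I P x r"
  obtains e where "r \<in> {1..n}" "e > 0" "\<And>y. x - e < y \<Longrightarrow> y \<le> x \<Longrightarrow> y \<in> I"
    "\<And>y j. x - e < y \<Longrightarrow> y \<le> x \<Longrightarrow> j \<in> {1..n} \<Longrightarrow> P y j = P x j + (if j = r then y - x else 0)"
proof -
  from assms have r: "r \<in> {1..n}" and h: "\<exists>e>0. \<forall>y. x - e < y \<and> y \<le> x \<longrightarrow> y \<in> I \<and>
      (\<forall>j\<in>{1..n}. P y j = P x j + (if j = r then y - x else 0))"
    unfolding leftaff_def by (rule conjunct1, rule conjunct2)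
  from h obtain e where "e > 0" and e: "\<forall>y. x - e < y \<and> y \<le> x \<longrightarrow> y \<in> I \<and>
      (\<forall>j\<in>{1..n}. P y j = P x j + (if j = r then y - x else 0))" by (elim exE conjE)
  show ?thesis
  proof (rule that[OF r \<open>e > 0\<close>])
    fix y assume "x - e < y" "y \<le> x" then show "y \<in> I" using e by blast
  next
    fix y j assume "x - e < y" "y \<le> x" "j \<in> {1..n}"
    then show "P y j = P x j + (if j = r then y - x else 0)" using e by blast
  qed
qed

lemma rightaffD:
  assumes "rightaff n I P x r"
  obtains e where "r \<in> {1..n}" "e > 0" "\<And>y. x \<le> y \<Longrightarrow> y < x + e \<Longrightarrow> y \<in> I"
    "\<And>y j. x \<le> y \<Longrightarrow> y < x + e \<Longrightarrow> j \<in> {1..n} \<Longrightarrow> P y j = P x j + (if j = r then y - x else 0)"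
proof -
  from assms have r: "r \<in> {1..n}" and h: "\<exists>e>0. \<forall>y. x \<le> y \<and> y < x + e \<longrightarrow> y \<in> I \<and>
      (\<forall>j\<in>{1..n}. P y j = P x j + (if j = r then y - x else 0))"
    unfolding rightaff_def by (rule conjunct1, rule conjunct2)
  from h obtain e where "e > 0" and e: "\<forall>y. x \<le> y \<and> y < x + e \<longrightarrow> y \<in> I \<and>
      (\<forall>j\<in>{1..n}. P y j = P x j + (if j = r then y - x else 0))" by (elim exE conjE)
  show ?thesis
  proof (rule that[OF r \<open>e > 0\<close>])
    fix y assume "x \<le> y" "y < x + e" then show "y \<in> I" using e by blast
  next
    fix y j assume "x \<le> y" "y < x + e" "j \<in> {1..n}"
    then show "P y j = P x j + (if j = r then y - x else 0)" using e by blast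
  qed
qed

lemma leftaff_uniq:
  assumes "leftaff n I P x r" "leftaff n I P x r'" shows "r = r'"
proof -
  obtain e1 where r: "r \<in> {1..n}" and e1: "e1 > 0"
    and a1: "\<And>y j. x - e1 < y \<Longrightarrow> y \<le> x \<Longrightarrow> j \<in> {1..n} \<Longrightarrow> P y j = P x j + (if j = r then y - x else 0)"
    using leftaffD[OF assms(1)] by metis
  obtain e2 where e2: "e2 > 0"
    and a2: "\<And>y j. x - e2 < y \<Longrightarrow> y \<le> x \<Longrightarrow> j \<in> {1..n} \<Longrightarrow> P y j = P x j + (if j = r' then y - x else 0)"
    using leftaffD[OF assms(2)] by metis
  define y where "y = x - min e1 e2 / 2"
  have y1: "x - e1 < y" "y \<le> x" "x - e2 < y" using e1 e2 by (auto simp: y_def)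
  have "P y r = P x r + (y - x)" using a1[OF y1(1,2) r] by simp
  moreover have "P y r = P x r + (if r = r' then y - x else 0)" using a2[OF y1(3,2) r] .
  moreover have "y - x \<noteq> 0" using e1 e2 by (simp add: y_def)
  ultimately show ?thesis by (cases "r = r'") auto
qed

lemma rightaff_uniq:
  assumes "rightaff n I P x r" "rightaff n I P x r'" shows "r = r'"
proof -
  obtain e1 where r: "r \<in> {1..n}" and e1: "e1 > 0"
    and a1: "\<And>y j. x \<le> y \<Longrightarrow> y < x + e1 \<Longrightarrow> j \<in> {1..n} \<Longrightarrow> P y j = P x j + (if j = r then y - x else 0)"
    using rightaffD[OF assms(1)] by metis
  obtain e2 where e2: "e2 > 0"
    and a2: "\<And>y j. x \<le> y \<Longrightarrow> y < x + e2 \<Longrightarrow> j \<in> {1..n} \<Longrightarrow> P y j = P x j + (if j = r' then y - x else 0)"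
    using rightaffD[OF assms(2)] by metis
  define y where "y = x + min e1 e2 / 2"
  have y1: "x \<le> y" "y < x + e1" "y < x + e2" using e1 e2 by (auto simp: y_def)
  have "P y r = P x r + (y - x)" using a1[OF y1(1,2) r] by simp
  moreover have "P y r = P x r + (if r = r' then y - x else 0)" using a2[OF y1(1,3) r] .
  moreover have "y - x \<noteq> 0" using e1 e2 by (simp add: y_def)
  ultimately show ?thesis by (cases "r = r'") auto
qed

lemma leftaff_leftderiv:
  assumes "leftaff n I P x r" "j \<in> {1..n}" "(comp P j has_real_derivative D) (at_left x)"
  shows "D = (if j = r then 1 else 0)"
proof -
  obtain e where e: "e > 0"
    and a: "\<And>y j. x - e < y \<Longrightarrow> y \<le> x \<Longrightarrow> j \<in> {1..n} \<Longrightarrow> P y j = P x j + (if j = r then y - x else 0)"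
    using leftaffD[OF assms(1)] by metis
  show ?thesis
  proof (rule left_deriv_unique[OF e(1) _ assms(3)])
    fix y assume "x - e < y" "y < x"
    then show "comp P j y = comp P j x + (y - x) * (if j = r then 1 else 0)"
      using a[of y j] assms(2) by (simp add: comp_def)
  qed
qed

lemma rightaff_rightderiv:
  assumes "rightaff n I P x r" "j \<in> {1..n}" "(comp P j has_real_derivative D) (at_right x)"
  shows "D = (if j = r then 1 else 0)"
proof -
  obtain e where e: "e > 0"
    and a: "\<And>y j. x \<le> y \<Longrightarrow> y < x + e \<Longrightarrow> j \<in> {1..n} \<Longrightarrow> P y j = P x j + (if j = r then y - x else 0)"
    using rightaffD[OF assms(1)] by metis
  show ?thesis
  proof (rule right_deriv_unique[OF e(1) _ assms(3)])
    fix y assume "x < y" "y < x + e"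
    then show "comp P j y = comp P j x + (y - x) * (if j = r then 1 else 0)"
      using a[of y j] assms(2) by (simp add: comp_def)
  qed
qed

lemma leftaff_local:
  assumes "leftaff n I P x r"
  shows "\<exists>e>0. \<forall>y. x - e < y \<and> y < x \<longrightarrow> y \<in> interior I \<and>
     (\<forall>j\<in>{1..n}. (comp P j has_real_derivative (if j = r then 1 else 0)) (at y)) \<and>
     (\<forall>j\<in>{1..n}. \<bar>P y j - P x j\<bar> \<le> \<bar>y - x\<bar>)"
proof -
  obtain e where e: "e > 0" and inI: "\<And>y. x - e < y \<Longrightarrow> y \<le> x \<Longrightarrow> y \<in> I"
    and a: "\<And>y j. x - e < y \<Longrightarrow> y \<le> x \<Longrightarrow> j \<in> {1..n} \<Longrightarrow> P y j = P x j + (if j = r then y - x else 0)"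
    using leftaffD[OF assms(1)] by metis
  have sub: "{x - e<..<x} \<subseteq> I" using inI by auto
  show ?thesis
  proof (intro exI[of _ e] conjI allI impI e)
    fix y assume y: "x - e < y \<and> y < x"
    show "y \<in> interior I" using interior_maximal[OF sub] y by auto
    show "\<forall>j\<in>{1..n}. (comp P j has_real_derivative (if j = r then 1 else 0)) (at y)"
    proof
      fix j assume j: "j \<in> {1..n}"
      show "(comp P j has_real_derivative (if j = r then 1 else 0)) (at y)"
      proof (rule affine_deriv_open[of "{x - e<..<x}" y _ "P x j" x])
        fix z assume "z \<in> {x - e<..<x}"
        then have "P z j = P x j + (if j = r then z - x else 0)" using a[of z j] j by simp
        then show "comp P j z = P x j + (z - x) * (if j = r then 1 else 0)" by (simp add: comp_def)
      qed (use y in auto)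
    qed
    show "\<forall>j\<in>{1..n}. \<bar>P y j - P x j\<bar> \<le> \<bar>y - x\<bar>"
    proof
      fix j assume j: "j \<in> {1..n}"
      have "P y j = P x j + (if j = r then y - x else 0)" using a[of y j] j y by simp
      then show "\<bar>P y j - P x j\<bar> \<le> \<bar>y - x\<bar>" by simp
    qed
  qed
qed

lemma rightaff_local:
  assumes "rightaff n I P x r"
  shows "\<exists>e>0. \<forall>y. x < y \<and> y < x + e \<longrightarrow> y \<in> interior I \<and>
     (\<forall>j\<in>{1..n}. (comp P j has_real_derivative (if j = r then 1 else 0)) (at y)) \<and>
     (\<forall>j\<in>{1..n}. \<bar>P y j - P x j\<bar> \<le> \<bar>y - x\<bar>)"
proof -
  obtain e where e: "e > 0" and inI: "\<And>y. x \<le> y \<Longrightarrow> y < x + e \<Longrightarrow> y \<in> I"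
    and a: "\<And>y j. x \<le> y \<Longrightarrow> y < x + e \<Longrightarrow> j \<in> {1..n} \<Longrightarrow> P y j = P x j + (if j = r then y - x else 0)"
    using rightaffD[OF assms(1)] by metis
  have sub: "{x<..<x + e} \<subseteq> I" using inI by auto
  show ?thesis
  proof (intro exI[of _ e] conjI allI impI e)
    fix y assume y: "x < y \<and> y < x + e"
    show "y \<in> interior I" using interior_maximal[OF sub] y by auto
    show "\<forall>j\<in>{1..n}. (comp P j has_real_derivative (if j = r then 1 else 0)) (at y)"
    proof
      fix j assume j: "j \<in> {1..n}"
      show "(comp P j has_real_derivative (if j = r then 1 else 0)) (at y)"
      proof (rule affine_deriv_open[of "{x<..<x + e}" y _ "P x j" x])
        fix z assume "z \<in> {x<..<x + e}"
        then have "P z j = P x j + (if j = r then z - x else 0)" using a[of z j] j by simp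
        then show "comp P j z = P x j + (z - x) * (if j = r then 1 else 0)" by (simp add: comp_def)
      qed (use y in auto)
    qed
    show "\<forall>j\<in>{1..n}. \<bar>P y j - P x j\<bar> \<le> \<bar>y - x\<bar>"
    proof
      fix j assume j: "j \<in> {1..n}"
      have "P y j = P x j + (if j = r then y - x else 0)" using a[of y j] j y by simp
      then show "\<bar>P y j - P x j\<bar> \<le> \<bar>y - x\<bar>" by simp
    qed
  qed
qed

lemma loc_side_left:
  assumes L: "\<forall>x\<in>I. (\<exists>y\<in>I. y < x) \<longrightarrow> (\<exists>r. leftaff n I P x r)"
    and x: "x \<in> I"
  shows "\<exists>e>0. \<forall>y\<in>I. x - e < y \<and> y < x \<longrightarrow> y \<in> interior I \<and>
      (\<forall>j\<in>{1..n}. \<bar>P y j - P x j\<bar> \<le> \<bar>y - x\<bar>) \<and>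
      (\<exists>r. (\<forall>j\<in>{1..n}. (comp P j has_real_derivative (if j = r then 1 else 0)) (at y)) \<and> leftaff n I P x r)"
proof (cases "\<exists>y\<in>I. y < x")
  case True
  then obtain r where r: "leftaff n I P x r" using L x by blast
  from leftaff_local[OF r] obtain e where e: "e > 0" and
    h: "\<forall>y. x - e < y \<and> y < x \<longrightarrow> y \<in> interior I \<and>
     (\<forall>j\<in>{1..n}. (comp P j has_real_derivative (if j = r then 1 else 0)) (at y)) \<and>
     (\<forall>j\<in>{1..n}. \<bar>P y j - P x j\<bar> \<le> \<bar>y - x\<bar>)" by (elim exE conjE)
  have "\<forall>y\<in>I. x - e < y \<and> y < x \<longrightarrow> y \<in> interior I \<and>
      (\<forall>j\<in>{1..n}. \<bar>P y j - P x j\<bar> \<le> \<bar>y - x\<bar>) \<and>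
      (\<exists>r. (\<forall>j\<in>{1..n}. (comp P j has_real_derivative (if j = r then 1 else 0)) (at y)) \<and> leftaff n I P x r)"
  proof (intro ballI impI)
    fix y assume "y \<in> I" "x - e < y \<and> y < x"
    then have hy: "y \<in> interior I \<and>
     (\<forall>j\<in>{1..n}. (comp P j has_real_derivative (if j = r then 1 else 0)) (at y)) \<and>
     (\<forall>j\<in>{1..n}. \<bar>P y j - P x j\<bar> \<le> \<bar>y - x\<bar>)" using h by blast
    then show "y \<in> interior I \<and>
      (\<forall>j\<in>{1..n}. \<bar>P y j - P x j\<bar> \<le> \<bar>y - x\<bar>) \<and>
      (\<exists>r. (\<forall>j\<in>{1..n}. (comp P j has_real_derivative (if j = r then 1 else 0)) (at y)) \<and> leftaff n I P x r)"
      using r by blast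
  qed
  then show ?thesis using e by blast
next
  case False then show ?thesis by (intro exI[of _ 1]) auto
qed

lemma loc_side_right:
  assumes R: "\<forall>x\<in>I. (\<exists>y\<in>I. x < y) \<longrightarrow> (\<exists>r. rightaff n I P x r)"
    and x: "x \<in> I"
  shows "\<exists>e>0. \<forall>y\<in>I. x < y \<and> y < x + e \<longrightarrow> y \<in> interior I \<and>
      (\<forall>j\<in>{1..n}. \<bar>P y j - P x j\<bar> \<le> \<bar>y - x\<bar>) \<and>
      (\<exists>r. (\<forall>j\<in>{1..n}. (comp P j has_real_derivative (if j = r then 1 else 0)) (at y)) \<and> rightaff n I P x r)"
proof (cases "\<exists>y\<in>I. x < y")
  case True
  then obtain r where r: "rightaff n I P x r" using R x by blast
  from rightaff_local[OF r] obtain e where e: "e > 0" and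
    h: "\<forall>y. x < y \<and> y < x + e \<longrightarrow> y \<in> interior I \<and>
     (\<forall>j\<in>{1..n}. (comp P j has_real_derivative (if j = r then 1 else 0)) (at y)) \<and>
     (\<forall>j\<in>{1..n}. \<bar>P y j - P x j\<bar> \<le> \<bar>y - x\<bar>)" by (elim exE conjE)
  have "\<forall>y\<in>I. x < y \<and> y < x + e \<longrightarrow> y \<in> interior I \<and>
      (\<forall>j\<in>{1..n}. \<bar>P y j - P x j\<bar> \<le> \<bar>y - x\<bar>) \<and>
      (\<exists>r. (\<forall>j\<in>{1..n}. (comp P j has_real_derivative (if j = r then 1 else 0)) (at y)) \<and> rightaff n I P x r)"
  proof (intro ballI impI)
    fix y assume "y \<in> I" "x < y \<and> y < x + e"
    then have hy: "y \<in> interior I \<and>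
     (\<forall>j\<in>{1..n}. (comp P j has_real_derivative (if j = r then 1 else 0)) (at y)) \<and>
     (\<forall>j\<in>{1..n}. \<bar>P y j - P x j\<bar> \<le> \<bar>y - x\<bar>)" using h by blast
    then show "y \<in> interior I \<and>
      (\<forall>j\<in>{1..n}. \<bar>P y j - P x j\<bar> \<le> \<bar>y - x\<bar>) \<and>
      (\<exists>r. (\<forall>j\<in>{1..n}. (comp P j has_real_derivative (if j = r then 1 else 0)) (at y)) \<and> rightaff n I P x r)"
      using r by blast
  qed
  then show ?thesis using e by blast
next
  case False then show ?thesis by (intro exI[of _ 1]) auto
qed

lemma loc_struct:
  assumes L: "\<forall>x\<in>I. (\<exists>y\<in>I. y < x) \<longrightarrow> (\<exists>r. leftaff n I P x r)"
    and R: "\<forall>x\<in>I. (\<exists>y\<in>I. x < y) \<longrightarrow> (\<exists>r. rightaff n I P x r)"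
    and x: "x \<in> I"
  shows "\<exists>e>0. \<forall>y\<in>I. dist y x < e \<longrightarrow> y \<noteq> x \<longrightarrow> y \<in> interior I \<and>
      (\<forall>j\<in>{1..n}. \<bar>P y j - P x j\<bar> \<le> \<bar>y - x\<bar>) \<and>
      (\<exists>r. (\<forall>j\<in>{1..n}. (comp P j has_real_derivative (if j = r then 1 else 0)) (at y)) \<and>
           (y < x \<longrightarrow> leftaff n I P x r) \<and> (x < y \<longrightarrow> rightaff n I P x r))"
proof -
  obtain e1 where e1: "e1 > 0" and h1: "\<forall>y\<in>I. x - e1 < y \<and> y < x \<longrightarrow> y \<in> interior I \<and>
      (\<forall>j\<in>{1..n}. \<bar>P y j - P x j\<bar> \<le> \<bar>y - x\<bar>) \<and>
      (\<exists>r. (\<forall>j\<in>{1..n}. (comp P j has_real_derivative (if j = r then 1 else 0)) (at y)) \<and> leftaff n I P x r)"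
    using loc_side_left[of I n P x] L x by metis
  obtain e2 where e2: "e2 > 0" and h2: "\<forall>y\<in>I. x < y \<and> y < x + e2 \<longrightarrow> y \<in> interior I \<and>
      (\<forall>j\<in>{1..n}. \<bar>P y j - P x j\<bar> \<le> \<bar>y - x\<bar>) \<and>
      (\<exists>r. (\<forall>j\<in>{1..n}. (comp P j has_real_derivative (if j = r then 1 else 0)) (at y)) \<and> rightaff n I P x r)"
    using loc_side_right[of I n P x] R x by metis
  show ?thesis
  proof (rule exI[of _ "min e1 e2"], rule conjI)
    show "0 < min e1 e2" using e1 e2 by simp
  next
    show "\<forall>y\<in>I. dist y x < min e1 e2 \<longrightarrow> y \<noteq> x \<longrightarrow> y \<in> interior I \<and>
      (\<forall>j\<in>{1..n}. \<bar>P y j - P x j\<bar> \<le> \<bar>y - x\<bar>) \<and>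
      (\<exists>r. (\<forall>j\<in>{1..n}. (comp P j has_real_derivative (if j = r then 1 else 0)) (at y)) \<and>
           (y < x \<longrightarrow> leftaff n I P x r) \<and> (x < y \<longrightarrow> rightaff n I P x r))"
    proof (intro ballI impI)
    fix y assume y: "y \<in> I" "dist y x < min e1 e2" "y \<noteq> x"
    show "y \<in> interior I \<and>
      (\<forall>j\<in>{1..n}. \<bar>P y j - P x j\<bar> \<le> \<bar>y - x\<bar>) \<and>
      (\<exists>r. (\<forall>j\<in>{1..n}. (comp P j has_real_derivative (if j = r then 1 else 0)) (at y)) \<and>
           (y < x \<longrightarrow> leftaff n I P x r) \<and> (x < y \<longrightarrow> rightaff n I P x r))"
    proof (cases "y < x")
      case True
      then have "x - e1 < y \<and> y < x" using y(2) by (auto simp: dist_real_def)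
      then have "y \<in> interior I \<and>
      (\<forall>j\<in>{1..n}. \<bar>P y j - P x j\<bar> \<le> \<bar>y - x\<bar>) \<and>
      (\<exists>r. (\<forall>j\<in>{1..n}. (comp P j has_real_derivative (if j = r then 1 else 0)) (at y)) \<and> leftaff n I P x r)"
        using h1 y(1) by blast
      then obtain r where A: "y \<in> interior I" "\<forall>j\<in>{1..n}. \<bar>P y j - P x j\<bar> \<le> \<bar>y - x\<bar>"
        "\<forall>j\<in>{1..n}. (comp P j has_real_derivative (if j = r then 1 else 0)) (at y)" "leftaff n I P x r"
        by (elim exE conjE)
      show ?thesis
        by (intro conjI exI[of _ r] A impI) (use True A in auto)
    next
      case False
      then have "x < y \<and> y < x + e2" using y(2,3) by (auto simp: dist_real_def)
      then have "y \<in> interior I \<and>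
      (\<forall>j\<in>{1..n}. \<bar>P y j - P x j\<bar> \<le> \<bar>y - x\<bar>) \<and>
      (\<exists>r. (\<forall>j\<in>{1..n}. (comp P j has_real_derivative (if j = r then 1 else 0)) (at y)) \<and> rightaff n I P x r)"
        using h2 y(1) by blast
      then obtain r where A: "y \<in> interior I" "\<forall>j\<in>{1..n}. \<bar>P y j - P x j\<bar> \<le> \<bar>y - x\<bar>"
        "\<forall>j\<in>{1..n}. (comp P j has_real_derivative (if j = r then 1 else 0)) (at y)" "rightaff n I P x r"
        by (elim exE conjE)
      show ?thesis
        by (intro conjI exI[of _ r] A impI) (use False A in auto)
    qed
    qed
  qed
qed

lemma interior_sides:
  fixes q :: real
  assumes "q \<in> interior I"
  shows "\<exists>y\<in>I. y < q" "\<exists>y\<in>I. q < y"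
proof -
  obtain e where e: "e > 0" "ball q e \<subseteq> I" using assms mem_interior by blast
  have "q - e/2 \<in> ball q e" "q + e/2 \<in> ball q e" using e(1) by (auto simp: dist_real_def)
  then have a: "q - e/2 \<in> I" and b: "q + e/2 \<in> I" using e by auto
  show "\<exists>y\<in>I. y < q" using a e(1) by (intro bexI[of _ "q - e/2"]) auto
  show "\<exists>y\<in>I. q < y" using b e(1) by (intro bexI[of _ "q + e/2"]) auto
qed

lemma diff_point:
  assumes "leftaff n I P q rL" "rightaff n I P q rR" "\<forall>j\<in>{1..n}. comp P j differentiable (at q)"
  shows "rL = rR \<and> (\<forall>j\<in>{1..n}. deriv (comp P j) q = (if j = rL then 1 else 0))"
proof -
  have d: "deriv (comp P j) q = (if j = rL then 1 else 0) \<and> deriv (comp P j) q = (if j = rR then 1 else 0)"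
    if j: "j \<in> {1..n}" for j
  proof -
    have D: "(comp P j has_real_derivative deriv (comp P j) q) (at q)"
      using assms(3) j DERIV_deriv_iff_real_differentiable by blast
    have "(comp P j has_real_derivative deriv (comp P j) q) (at_left q)"
      using D has_field_derivative_at_within by blast
    moreover have "(comp P j has_real_derivative deriv (comp P j) q) (at_right q)"
      using D has_field_derivative_at_within by blast
    ultimately show ?thesis
      using leftaff_leftderiv[OF assms(1) j] rightaff_rightderiv[OF assms(2) j] by blast
  qed
  have rL: "rL \<in> {1..n}" using assms(1) unfolding leftaff_def by blast
  from d[OF rL] have "rL = rR" by (cases "rL = rR") auto
  then show ?thesis using d by blast
qed

lemma loc_const:
  assumes L: "\<forall>x\<in>I. (\<exists>y\<in>I. y < x) \<longrightarrow> (\<exists>r. leftaff n I P x r)"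
    and R: "\<forall>x\<in>I. (\<exists>y\<in>I. x < y) \<longrightarrow> (\<exists>r. rightaff n I P x r)"
    and q: "q \<in> I - nondiff_set n I P"
  shows "\<exists>e>0. \<forall>x\<in>ball q e \<inter> I. x \<notin> nondiff_set n I P \<longrightarrow>
        (\<forall>j\<in>{1..n}. deriv (comp P j) x = deriv (comp P j) q)"
proof -
  have qI: "q \<in> I" and qf: "q \<notin> frontier I" and qd: "\<forall>j\<in>{1..n}. comp P j differentiable (at q)"
    using q unfolding nondiff_set_def by auto
  have "q \<in> interior I" using qI qf closure_subset unfolding frontier_def by auto
  from interior_sides[OF this] obtain rL rR where rL: "leftaff n I P q rL" and rR: "rightaff n I P q rR"
    using L R qI by blast
  from diff_point[OF rL rR qd] have eq: "rL = rR" and dq: "\<forall>j\<in>{1..n}. deriv (comp P j) q = (if j = rL then 1 else 0)"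
    by auto
  have "\<exists>e>0. \<forall>y\<in>I. dist y q < e \<longrightarrow> y \<noteq> q \<longrightarrow> y \<in> interior I \<and>
      (\<forall>j\<in>{1..n}. \<bar>P y j - P q j\<bar> \<le> \<bar>y - q\<bar>) \<and>
      (\<exists>r. (\<forall>j\<in>{1..n}. (comp P j has_real_derivative (if j = r then 1 else 0)) (at y)) \<and>
           (y < q \<longrightarrow> leftaff n I P q r) \<and> (q < y \<longrightarrow> rightaff n I P q r))"
    by (rule loc_struct[where I=I and n=n and P=P and x=q]) (fact L | fact R | fact qI)+
  then obtain e where e: "e > 0" and h: "\<forall>y\<in>I. dist y q < e \<longrightarrow> y \<noteq> q \<longrightarrow> y \<in> interior I \<and>
      (\<forall>j\<in>{1..n}. \<bar>P y j - P q j\<bar> \<le> \<bar>y - q\<bar>) \<and>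
      (\<exists>r. (\<forall>j\<in>{1..n}. (comp P j has_real_derivative (if j = r then 1 else 0)) (at y)) \<and>
           (y < q \<longrightarrow> leftaff n I P q r) \<and> (q < y \<longrightarrow> rightaff n I P q r))"
    by (elim exE conjE)
  show ?thesis
  proof (intro exI[of _ e] conjI ballI impI e)
    fix x j assume x: "x \<in> ball q e \<inter> I" and j: "j \<in> {1..n}"
    show "deriv (comp P j) x = deriv (comp P j) q"
    proof (cases "x = q")
      case False
      have "dist x q < e" "x \<in> I" using x by (auto simp: dist_commute)
      then have "\<exists>r. (\<forall>j\<in>{1..n}. (comp P j has_real_derivative (if j = r then 1 else 0)) (at x)) \<and>
           (x < q \<longrightarrow> leftaff n I P q r) \<and> (q < x \<longrightarrow> rightaff n I P q r)"
        using h False by blast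
      then obtain r where r: "\<forall>j\<in>{1..n}. (comp P j has_real_derivative (if j = r then 1 else 0)) (at x)"
        "x < q \<longrightarrow> leftaff n I P q r" "q < x \<longrightarrow> rightaff n I P q r"
        by (elim exE conjE)
      have "r = rL"
      proof (cases "x < q")
        case True then show ?thesis using leftaff_uniq rL r(2) by blast
      next
        case False then have "q < x" using \<open>x \<noteq> q\<close> by simp
        then show ?thesis using rightaff_uniq rR r(3) eq by blast
      qed
      then have "deriv (comp P j) x = (if j = rL then 1 else 0)" using r(1) j DERIV_imp_deriv by blast
      then show ?thesis using dq j by simp
    qed simp
  qed
qed

lemma loc_struct':
  assumes L: "\<forall>x\<in>I. (\<exists>y\<in>I. y < x) \<longrightarrow> (\<exists>r. leftaff n I P x r)"
    and R: "\<forall>x\<in>I. (\<exists>y\<in>I. x < y) \<longrightarrow> (\<exists>r. rightaff n I P x r)"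
    and x: "x \<in> I"
  obtains e where "e > 0" "\<And>y. y \<in> I \<Longrightarrow> dist y x < e \<Longrightarrow> y \<noteq> x \<Longrightarrow> y \<in> interior I"
    "\<And>y j. y \<in> I \<Longrightarrow> dist y x < e \<Longrightarrow> j \<in> {1..n} \<Longrightarrow> \<bar>P y j - P x j\<bar> \<le> \<bar>y - x\<bar>"
    "\<And>y. y \<in> I \<Longrightarrow> dist y x < e \<Longrightarrow> y \<noteq> x \<Longrightarrow> \<exists>r. (\<forall>j\<in>{1..n}. (comp P j has_real_derivative (if j = r then 1 else 0)) (at y))"
proof -
  have "\<exists>e>0. \<forall>y\<in>I. dist y x < e \<longrightarrow> y \<noteq> x \<longrightarrow> y \<in> interior I \<and>
      (\<forall>j\<in>{1..n}. \<bar>P y j - P x j\<bar> \<le> \<bar>y - x\<bar>) \<and>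
      (\<exists>r. (\<forall>j\<in>{1..n}. (comp P j has_real_derivative (if j = r then 1 else 0)) (at y)) \<and>
           (y < x \<longrightarrow> leftaff n I P x r) \<and> (x < y \<longrightarrow> rightaff n I P x r))"
    by (rule loc_struct[where I=I and n=n and P=P and x=x]) (fact L | fact R | fact x)+
  then obtain e where e: "e > 0" and h: "\<forall>y\<in>I. dist y x < e \<longrightarrow> y \<noteq> x \<longrightarrow> y \<in> interior I \<and>
      (\<forall>j\<in>{1..n}. \<bar>P y j - P x j\<bar> \<le> \<bar>y - x\<bar>) \<and>
      (\<exists>r. (\<forall>j\<in>{1..n}. (comp P j has_real_derivative (if j = r then 1 else 0)) (at y)) \<and>
           (y < x \<longrightarrow> leftaff n I P x r) \<and> (x < y \<longrightarrow> rightaff n I P x r))"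
    by (elim exE conjE)
  show ?thesis
  proof (rule that[OF e])
    fix y assume "y \<in> I" "dist y x < e" "y \<noteq> x" then show "y \<in> interior I" using h by blast
  next
    fix y j assume y: "y \<in> I" "dist y x < e" and j: "j \<in> {1..n}"
    show "\<bar>P y j - P x j\<bar> \<le> \<bar>y - x\<bar>"
    proof (cases "y = x")
      case False then show ?thesis using h y j by blast
    qed simp
  next
    fix y assume "y \<in> I" "dist y x < e" "y \<noteq> x"
    then show "\<exists>r. (\<forall>j\<in>{1..n}. (comp P j has_real_derivative (if j = r then 1 else 0)) (at y))"
      using h by blast
  qed
qed

lemma nsys_crit:
  assumes os: "ordered_sum n I P"
    and L: "\<And>x. x \<in> I \<Longrightarrow> (\<exists>y\<in>I. y < x) \<Longrightarrow> \<exists>r. leftaff n I P x r"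
    and R: "\<And>x. x \<in> I \<Longrightarrow> (\<exists>y\<in>I. x < y) \<Longrightarrow> \<exists>r. rightaff n I P x r"
    and J: "\<And>x r s. x \<in> interior I \<Longrightarrow> leftaff n I P x r \<Longrightarrow> rightaff n I P x s \<Longrightarrow> r < s \<Longrightarrow>
               \<forall>j\<in>{r..s}. P x j = P x r"
  shows "n_system n I P"
proof -
  have L': "\<forall>x\<in>I. (\<exists>y\<in>I. y < x) \<longrightarrow> (\<exists>r. leftaff n I P x r)" using L by blast
  have R': "\<forall>x\<in>I. (\<exists>y\<in>I. x < y) \<longrightarrow> (\<exists>r. rightaff n I P x r)" using R by blast
  have cont: "\<forall>j\<in>{1..n}. continuous_on I (comp P j)"
  proof
    fix j assume j: "j \<in> {1..n}"
    show "continuous_on I (comp P j)"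
      unfolding continuous_on_eq_continuous_within continuous_within_eps_delta
    proof (intro ballI allI impI)
      fix x and \<epsilon> :: real assume x: "x \<in> I" and \<epsilon>: "\<epsilon> > 0"
      obtain e where e: "e > 0"
        and lip: "\<And>y j. y \<in> I \<Longrightarrow> dist y x < e \<Longrightarrow> j \<in> {1..n} \<Longrightarrow> \<bar>P y j - P x j\<bar> \<le> \<bar>y - x\<bar>"
        using loc_struct'[where I=I and n=n and P=P and x=x, OF L' R' x] by metis
      show "\<exists>d>0. \<forall>x'\<in>I. dist x' x < d \<longrightarrow> dist (comp P j x') (comp P j x) < \<epsilon>"
      proof (intro exI[of _ "min e \<epsilon>"] conjI ballI impI)
        show "0 < min e \<epsilon>" using e \<epsilon> by simp
        fix y assume y: "y \<in> I" "dist y x < min e \<epsilon>"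
        have "\<bar>P y j - P x j\<bar> \<le> \<bar>y - x\<bar>" using lip[OF y(1) _ j] y(2) by simp
        then show "dist (comp P j y) (comp P j x) < \<epsilon>" using y(2) by (simp add: comp_def dist_real_def)
      qed
    qed
  qed
  have disc: "discrete_in (nondiff_set n I P) I"
    unfolding discrete_in_def
  proof
    fix x assume x: "x \<in> I"
    obtain e where e: "e > 0"
      and int: "\<And>y. y \<in> I \<Longrightarrow> dist y x < e \<Longrightarrow> y \<noteq> x \<Longrightarrow> y \<in> interior I"
      and der: "\<And>y. y \<in> I \<Longrightarrow> dist y x < e \<Longrightarrow> y \<noteq> x \<Longrightarrow> \<exists>r. (\<forall>j\<in>{1..n}. (comp P j has_real_derivative (if j = r then 1 else 0)) (at y))"
      using loc_struct'[where I=I and n=n and P=P and x=x, OF L' R' x] by metis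
    have "nondiff_set n I P \<inter> ball x e \<subseteq> {x}"
    proof
      fix y assume y: "y \<in> nondiff_set n I P \<inter> ball x e"
      show "y \<in> {x}"
      proof (rule ccontr)
        assume "y \<notin> {x}"
        then have yx: "y \<noteq> x" by simp
        have yI: "y \<in> I" and dy: "dist y x < e" using y by (auto simp: nondiff_set_def dist_commute)
        have "y \<in> interior I" using int[OF yI dy yx] .
        then have nf: "y \<notin> frontier I" by (simp add: frontier_def)
        obtain r where r: "\<forall>j\<in>{1..n}. (comp P j has_real_derivative (if j = r then 1 else 0)) (at y)"
          using der[OF yI dy yx] by blast
        have "\<forall>j\<in>{1..n}. comp P j differentiable (at y)"
          using r real_differentiable_def by blast
        then show False using y nf by (simp add: nondiff_set_def)
      qed
    qed
    then have "finite (nondiff_set n I P \<inter> ball x e)" using finite_subset by blast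
    then show "\<exists>e>0. finite (nondiff_set n I P \<inter> ball x e)" using e by blast
  qed
  have lc: "\<forall>q\<in>I - nondiff_set n I P. \<exists>e>0. \<forall>x\<in>ball q e \<inter> I. x \<notin> nondiff_set n I P \<longrightarrow>
        (\<forall>j\<in>{1..n}. deriv (comp P j) x = deriv (comp P j) q)"
  proof
    fix q assume q: "q \<in> I - nondiff_set n I P"
    show "\<exists>e>0. \<forall>x\<in>ball q e \<inter> I. x \<notin> nondiff_set n I P \<longrightarrow>
        (\<forall>j\<in>{1..n}. deriv (comp P j) x = deriv (comp P j) q)"
      by (rule loc_const[where I=I and n=n and P=P and q=q]) (fact L' | fact R' | fact q)+
  qed
  have cpl: "cont_pw_linear n I P" unfolding cont_pw_linear_def using cont disc lc by blast
  have S2: "\<forall>H. diff_subinterval n I P H \<longrightarrow>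
        (\<exists>r\<in>{1..n}. (\<forall>x\<in>H. \<forall>y\<in>H. P y r - P x r = y - x) \<and>
                    (\<forall>j\<in>{1..n}. j \<noteq> r \<longrightarrow> (\<forall>x\<in>H. \<forall>y\<in>H. P y j = P x j)))"
  proof (intro allI impI)
    fix H assume H: "diff_subinterval n I P H"
    have iH: "is_interval H" and oH: "open H" and neH: "H \<noteq> {}" and HI: "H \<subseteq> I"
      and dH: "\<forall>q\<in>H. \<forall>j\<in>{1..n}. comp P j differentiable (at q)"
      using H unfolding diff_subinterval_def by auto
    have Hint: "H \<subseteq> interior I" using interior_maximal[OF HI oH] .
    have Hnd: "q \<in> I - nondiff_set n I P" if q: "q \<in> H" for q
      using q HI Hint dH by (auto simp: nondiff_set_def frontier_def)
    have dpt: "\<exists>r\<in>{1..n}. \<forall>j\<in>{1..n}. deriv (comp P j) q = (if j = r then 1 else 0)" if q: "q \<in> H" for q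
    proof -
      have qi: "q \<in> interior I" using q Hint by blast
      obtain rL rR where rL: "leftaff n I P q rL" and rR: "rightaff n I P q rR"
        using interior_sides[OF qi] L R qi interior_subset by blast
      have "rL \<in> {1..n}" using rL unfolding leftaff_def by blast
      then show ?thesis using diff_point[OF rL rR] dH q by blast
    qed
    have const: "deriv (comp P j) constant_on H" if j: "j \<in> {1..n}" for j
    proof (rule continuous_discrete_range_constant)
      show "connected H" using iH is_interval_connected by blast
      show "continuous_on H (deriv (comp P j))"
        unfolding continuous_on_eq_continuous_within continuous_within_eps_delta
      proof (intro ballI allI impI)
        fix q and \<epsilon> :: real assume q: "q \<in> H" and \<epsilon>: "\<epsilon> > 0"
        obtain e where e: "e > 0" and h: "\<forall>x\<in>ball q e \<inter> I. x \<notin> nondiff_set n I P \<longrightarrow>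
          (\<forall>j\<in>{1..n}. deriv (comp P j) x = deriv (comp P j) q)"
          using lc Hnd[OF q] by blast
        show "\<exists>d>0. \<forall>x'\<in>H. dist x' q < d \<longrightarrow> dist (deriv (comp P j) x') (deriv (comp P j) q) < \<epsilon>"
        proof (intro exI[of _ e] conjI ballI impI e)
          fix x assume x: "x \<in> H" "dist x q < e"
          have "x \<in> ball q e \<inter> I" "x \<notin> nondiff_set n I P" using x Hnd[OF x(1)] by (auto simp: dist_commute)
          then have "deriv (comp P j) x = deriv (comp P j) q" using h j by blast
          then show "dist (deriv (comp P j) x) (deriv (comp P j) q) < \<epsilon>" using \<epsilon> by simp
        qed
      qed
      fix x assume x: "x \<in> H"
      show "\<exists>e>0. \<forall>y. y \<in> H \<and> deriv (comp P j) y \<noteq> deriv (comp P j) x \<longrightarrow>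
              e \<le> norm (deriv (comp P j) y - deriv (comp P j) x)"
      proof (intro exI[of _ 1] conjI allI impI)
        fix y assume y: "y \<in> H \<and> deriv (comp P j) y \<noteq> deriv (comp P j) x"
        obtain r1 where "\<forall>j\<in>{1..n}. deriv (comp P j) x = (if j = r1 then 1 else 0)" using dpt[OF x] by blast
        moreover obtain r2 where "\<forall>j\<in>{1..n}. deriv (comp P j) y = (if j = r2 then 1 else 0)" using dpt y by blast
        ultimately show "1 \<le> norm (deriv (comp P j) y - deriv (comp P j) x)" using y j
          by (auto split: if_splits)
      qed simp
    qed
    obtain q0 where q0: "q0 \<in> H" using neH by blast
    obtain r0 where r0: "r0 \<in> {1..n}" and dq0: "\<forall>j\<in>{1..n}. deriv (comp P j) q0 = (if j = r0 then 1 else 0)"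
      using dpt[OF q0] by blast
    have dall: "\<forall>x\<in>H. deriv (comp P j) x = (if j = r0 then 1 else 0)" if j: "j \<in> {1..n}" for j
    proof -
      obtain a where a: "\<forall>x\<in>H. deriv (comp P j) x = a" using const[OF j] unfolding constant_on_def by blast
      then show ?thesis using dq0 j q0 by auto
    qed
    have aff: "P y j - P x j = (if j = r0 then 1 else 0) * (y - x)" if j: "j \<in> {1..n}" and x: "x \<in> H" and y: "y \<in> H" for j x y
    proof -
      define c where "c = (if j = r0 then 1 else 0 :: real)"
      have "\<exists>k. \<forall>t\<in>H. (\<lambda>t. P t j - c * t) t = k"
      proof (rule has_field_derivative_zero_constant)
        show "convex H" using iH is_interval_convex by blast
        fix t assume t: "t \<in> H"
        have D: "(comp P j has_real_derivative deriv (comp P j) t) (at t)"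
          using dH t j DERIV_deriv_iff_real_differentiable by blast
        have "deriv (comp P j) t = c" using dall[OF j] t by (simp add: c_def)
        with D have "((\<lambda>t. P t j) has_real_derivative c) (at t)" by (simp add: comp_def)
        then have "((\<lambda>t. P t j - c * t) has_real_derivative c - c * 1) (at t)"
          by (auto intro!: derivative_eq_intros)
        then show "((\<lambda>t. P t j - c * t) has_real_derivative 0) (at t within H)"
          using has_field_derivative_at_within by fastforce
      qed
      then obtain k where "\<forall>t\<in>H. P t j - c * t = k" by blast
      then have "P y j - c * y = P x j - c * x" using x y by metis
      then show ?thesis by (simp add: c_def algebra_simps)
    qed
    show "\<exists>r\<in>{1..n}. (\<forall>x\<in>H. \<forall>y\<in>H. P y r - P x r = y - x) \<and>
                    (\<forall>j\<in>{1..n}. j \<noteq> r \<longrightarrow> (\<forall>x\<in>H. \<forall>y\<in>H. P y j = P x j))"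
    proof (intro bexI[of _ r0] conjI ballI impI r0)
      fix x y assume "x \<in> H" "y \<in> H" then show "P y r0 - P x r0 = y - x" using aff[OF r0] by simp
    next
      fix j x y assume "j \<in> {1..n}" "j \<noteq> r0" "x \<in> H" "y \<in> H"
      then show "P y j = P x j" using aff[of j x y] by simp
    qed
  qed
  have S3: "\<forall>q\<in>interior I. q \<in> nondiff_set n I P \<longrightarrow>
        (\<forall>r\<in>{1..n}. \<forall>s\<in>{1..n}.
           (comp P r has_real_derivative 1) (at_left q) \<longrightarrow>
           (comp P s has_real_derivative 1) (at_right q) \<longrightarrow> r < s \<longrightarrow>
           (\<forall>j\<in>{r..s}. P q j = P q r))"
  proof (intro ballI impI)
    fix q r s assume q: "q \<in> interior I" and r: "r \<in> {1..n}" and s: "s \<in> {1..n}"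
      and dl: "(comp P r has_real_derivative 1) (at_left q)" and dr: "(comp P s has_real_derivative 1) (at_right q)"
      and rs: "r < s"
    fix j assume j: "j \<in> {r..s}"
    obtain rL rR where rL: "leftaff n I P q rL" and rR: "rightaff n I P q rR"
      using interior_sides[OF q] L R q interior_subset by blast
    have "1 = (if r = rL then 1 else (0::real))" using leftaff_leftderiv[OF rL r dl] .
    then have e1: "r = rL" by (cases "r = rL") auto
    have "1 = (if s = rR then 1 else (0::real))" using rightaff_rightderiv[OF rR s dr] .
    then have e2: "s = rR" by (cases "s = rR") auto
    from e1 e2 have "\<forall>j\<in>{r..s}. P q j = P q r" using J[OF q] rL rR rs by blast
    then show "P q j = P q r" using j by blast
  qed
  show ?thesis unfolding n_system_def using cpl os S2 S3 by blast
qed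

definition Tsum :: "nat \<Rightarrow> (nat \<Rightarrow> real) \<Rightarrow> (nat \<Rightarrow> real) \<Rightarrow> nat \<Rightarrow> real" where
  "Tsum n A B j = (\<Sum>i\<in>{j..n}. B i - A i)"

definition stair :: "nat \<Rightarrow> real \<Rightarrow> (nat \<Rightarrow> real) \<Rightarrow> (nat \<Rightarrow> real) \<Rightarrow> real \<Rightarrow> nat \<Rightarrow> real" where
  "stair n a A B t j = A j + min (B j - A j) (max 0 (t - a - Tsum n A B (Suc j)))"

lemma Tsum_anti:
  assumes mono: "\<forall>j\<in>{1..n}. A j \<le> B j" and "1 \<le> j" "j \<le> k"
  shows "Tsum n A B k \<le> Tsum n A B j"
  unfolding Tsum_def
  by (rule sum_mono2) (use assms in auto)

lemma Tsum_nonneg: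
  assumes mono: "\<forall>j\<in>{1..n}. A j \<le> B j" and "1 \<le> j"
  shows "0 \<le> Tsum n A B j"
  unfolding Tsum_def by (rule sum_nonneg) (use assms in auto)

lemma Tsum_Suc_n: "Tsum n A B (Suc n) = 0"
  by (simp add: Tsum_def)

lemma Tsum_step:
  assumes "j \<le> n"
  shows "Tsum n A B j = (B j - A j) + Tsum n A B (Suc j)"
  unfolding Tsum_def using assms by (simp add: sum.atLeast_Suc_atMost)

lemma Tsum_1:
  assumes "(\<Sum>j=1..n. B j) - (\<Sum>j=1..n. A j) = b - a"
  shows "Tsum n A B 1 = b - a"
  using assms by (simp add: Tsum_def sum_subtractf)

lemma clamp_identity:
  fixes d T \<tau> :: real
  assumes "0 \<le> d" "0 \<le> T"
  shows "min d (max 0 (\<tau> - T)) + min T (max 0 \<tau>) = min (d + T) (max 0 \<tau>)"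
  using assms by (auto simp: min_def max_def)

lemma sum_clamp:
  assumes mono: "\<forall>j\<in>{1..n}. A j \<le> B j"
  shows "1 \<le> m \<Longrightarrow> m \<le> Suc n \<Longrightarrow>
    (\<Sum>j\<in>{m..n}. min (B j - A j) (max 0 (\<tau> - Tsum n A B (Suc j)))) = min (Tsum n A B m) (max 0 \<tau>)"
proof (induction "Suc n - m" arbitrary: m)
  case 0
  then have "m = Suc n" by simp
  then show ?case by (simp add: Tsum_Suc_n)
next
  case (Suc k)
  then have mn: "m \<le> n" by simp
  have IH: "(\<Sum>j\<in>{Suc m..n}. min (B j - A j) (max 0 (\<tau> - Tsum n A B (Suc j)))) = min (Tsum n A B (Suc m)) (max 0 \<tau>)"
    using Suc by simp
  have "(\<Sum>j\<in>{m..n}. min (B j - A j) (max 0 (\<tau> - Tsum n A B (Suc j)))) =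
     min (B m - A m) (max 0 (\<tau> - Tsum n A B (Suc m))) + (\<Sum>j\<in>{Suc m..n}. min (B j - A j) (max 0 (\<tau> - Tsum n A B (Suc j))))"
    using mn by (simp add: sum.atLeast_Suc_atMost)
  also have "\<dots> = min (B m - A m + Tsum n A B (Suc m)) (max 0 \<tau>)"
    unfolding IH
    by (rule clamp_identity) (use mono Suc.prems mn Tsum_nonneg[OF mono, of "Suc m"] in auto)
  also have "\<dots> = min (Tsum n A B m) (max 0 \<tau>)" using Tsum_step[OF mn] by simp
  finally show ?case .
qed

lemma stair_at_a:
  assumes mono: "\<forall>j\<in>{1..n}. A j \<le> B j" and j: "j \<in> {1..n}"
  shows "stair n a A B a j = A j"
proof -
  have "0 \<le> Tsum n A B (Suc j)" using Tsum_nonneg[OF mono, of "Suc j"] by simp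
  then show ?thesis using mono j by (simp add: stair_def)
qed

lemma stair_at_b:
  assumes mono: "\<forall>j\<in>{1..n}. A j \<le> B j" and j: "j \<in> {1..n}"
    and sum: "(\<Sum>j=1..n. B j) - (\<Sum>j=1..n. A j) = b - a"
  shows "stair n a A B b j = B j"
proof -
  have "Tsum n A B j \<le> Tsum n A B 1" using Tsum_anti[OF mono, of 1 j] j by simp
  then have "B j - A j + Tsum n A B (Suc j) \<le> b - a" using Tsum_step[of j n A B] Tsum_1[OF sum] j by simp
  then show ?thesis using mono j by (simp add: stair_def)
qed

lemma stair_right:
  assumes mono: "\<forall>j\<in>{1..n}. A j \<le> B j"
    and sum: "(\<Sum>j=1..n. B j) - (\<Sum>j=1..n. A j) = b - a"
    and x: "a \<le> x" "x < b"
  shows "\<exists>r\<in>{1..n}. Tsum n A B (Suc r) \<le> x - a \<and> x - a < Tsum n A B r \<and>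
     (\<forall>y j. x \<le> y \<and> y < a + Tsum n A B r \<longrightarrow> j \<in> {1..n} \<longrightarrow>
        stair n a A B y j = stair n a A B x j + (if j = r then y - x else 0))"
proof -
  define S where "S = {j\<in>{1..n}. x - a < Tsum n A B j}"
  have T1: "Tsum n A B 1 = b - a" using Tsum_1[OF sum] .
  have n1: "1 \<le> n"
  proof (rule ccontr)
    assume "\<not> 1 \<le> n" then have "n = 0" by simp
    then show False using T1 x by (simp add: Tsum_def)
  qed
  have "1 \<in> S" using n1 T1 x by (simp add: S_def)
  have fS: "finite S" by (simp add: S_def)
  define r where "r = Max S"
  have rS: "r \<in> S" using Max_in[OF fS] \<open>1 \<in> S\<close> by (auto simp: r_def)
  then have r: "r \<in> {1..n}" "x - a < Tsum n A B r" by (auto simp: S_def)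
  have rlow: "Tsum n A B (Suc r) \<le> x - a"
  proof (cases "r = n")
    case True then show ?thesis using Tsum_Suc_n x by simp
  next
    case False
    then have "Suc r \<in> {1..n}" using r by auto
    moreover have "Suc r \<notin> S" using Max_ge[OF fS] r_def by fastforce
    ultimately show ?thesis by (auto simp: S_def)
  qed
  have Tr: "Tsum n A B r = (B r - A r) + Tsum n A B (Suc r)" using Tsum_step r by auto
  have main: "stair n a A B y j = stair n a A B x j + (if j = r then y - x else 0)"
    if y: "x \<le> y" "y < a + Tsum n A B r" and j: "j \<in> {1..n}" for y j
  proof -
    consider "j = r" | "r < j" | "j < r" by linarith
    then show ?thesis
    proof cases
      case 1
      then show ?thesis using y x rlow Tr by (simp add: stair_def min_def max_def)
    next
      case 2
      have "Tsum n A B j \<le> Tsum n A B (Suc r)" using Tsum_anti[OF mono, of "Suc r" j] 2 by simp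
      moreover have "Tsum n A B j = (B j - A j) + Tsum n A B (Suc j)" using Tsum_step j by auto
      ultimately show ?thesis using 2 y rlow by (simp add: stair_def min_def max_def)
    next
      case 3
      have "Tsum n A B r \<le> Tsum n A B (Suc j)" using Tsum_anti[OF mono, of "Suc j" r] 3 by simp
      then show ?thesis using 3 y r by (simp add: stair_def min_def max_def)
    qed
  qed
  show ?thesis using r rlow main by blast
qed

lemma stair_left:
  assumes mono: "\<forall>j\<in>{1..n}. A j \<le> B j"
    and sum: "(\<Sum>j=1..n. B j) - (\<Sum>j=1..n. A j) = b - a"
    and x: "a < x" "x \<le> b"
  shows "\<exists>r\<in>{1..n}. Tsum n A B (Suc r) < x - a \<and> x - a \<le> Tsum n A B r \<and>
     (\<forall>y j. a + Tsum n A B (Suc r) < y \<and> y \<le> x \<longrightarrow> j \<in> {1..n} \<longrightarrow>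
        stair n a A B y j = stair n a A B x j + (if j = r then y - x else 0))"
proof -
  define S where "S = {j\<in>{1..n}. Tsum n A B (Suc j) < x - a}"
  have T1: "Tsum n A B 1 = b - a" using Tsum_1[OF sum] .
  have n1: "1 \<le> n"
  proof (rule ccontr)
    assume "\<not> 1 \<le> n" then have "n = 0" by simp
    then show False using T1 x by (simp add: Tsum_def)
  qed
  have "n \<in> S" using n1 Tsum_Suc_n x by (simp add: S_def)
  have fS: "finite S" by (simp add: S_def)
  define r where "r = Min S"
  have rS: "r \<in> S" using Min_in[OF fS] \<open>n \<in> S\<close> by (auto simp: r_def)
  then have r: "r \<in> {1..n}" "Tsum n A B (Suc r) < x - a" by (auto simp: S_def)
  have rhigh: "x - a \<le> Tsum n A B r"
  proof (cases "r = 1")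
    case True then show ?thesis using T1 x by simp
  next
    case False
    then have "r - 1 \<in> {1..n}" using r by auto
    moreover have "r - 1 \<notin> S" using Min_le[OF fS] r_def False r(1) by fastforce
    ultimately show ?thesis using False r(1) by (auto simp: S_def)
  qed
  have Tr: "Tsum n A B r = (B r - A r) + Tsum n A B (Suc r)" using Tsum_step r by auto
  have main: "stair n a A B y j = stair n a A B x j + (if j = r then y - x else 0)"
    if y: "a + Tsum n A B (Suc r) < y" "y \<le> x" and j: "j \<in> {1..n}" for y j
  proof -
    consider "j = r" | "r < j" | "j < r" by linarith
    then show ?thesis
    proof cases
      case 1
      then show ?thesis using y x rhigh r Tr by (simp add: stair_def min_def max_def)
    next
      case 2
      have "Tsum n A B j \<le> Tsum n A B (Suc r)" using Tsum_anti[OF mono, of "Suc r" j] 2 by simp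
      moreover have "Tsum n A B j = (B j - A j) + Tsum n A B (Suc j)" using Tsum_step j by auto
      ultimately show ?thesis using 2 y r by (simp add: stair_def min_def max_def)
    next
      case 3
      have "Tsum n A B r \<le> Tsum n A B (Suc j)" using Tsum_anti[OF mono, of "Suc j" r] 3 by simp
      then show ?thesis using 3 y rhigh by (simp add: stair_def min_def max_def)
    qed
  qed
  show ?thesis using r rhigh main by blast
qed

lemma stair_os:
  assumes mono: "\<forall>j\<in>{1..n}. A j \<le> B j"
    and sum: "(\<Sum>j=1..n. B j) - (\<Sum>j=1..n. A j) = b - a"
    and sA: "(\<Sum>j=1..n. A j) = a"
    and oA: "0 \<le> A 1" "\<forall>j\<in>{1..<n}. A j \<le> A (Suc j)"
    and oB: "\<forall>j\<in>{1..<n}. B j \<le> B (Suc j)"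
    and t: "a \<le> t" "t \<le> b" and n1: "1 \<le> n"
  shows "0 \<le> stair n a A B t 1 \<and> (\<forall>j\<in>{1..<n}. stair n a A B t j \<le> stair n a A B t (Suc j)) \<and>
         (\<Sum>j=1..n. stair n a A B t j) = t"
proof (intro conjI ballI)
  have ge: "A j \<le> stair n a A B t j" if "j \<in> {1..n}" for j
    using mono that by (simp add: stair_def)
  have le: "stair n a A B t j \<le> B j" if "j \<in> {1..n}" for j
    using mono that by (simp add: stair_def)
  show "0 \<le> stair n a A B t 1" using ge[of 1] oA n1 by simp
  fix j assume j: "j \<in> {1..<n}"
  show "stair n a A B t j \<le> stair n a A B t (Suc j)"
  proof (cases "Tsum n A B (Suc j) \<le> t - a")
    case True
    have sj: "Suc j \<le> n" using j by simp
    have "Tsum n A B (Suc j) = (B (Suc j) - A (Suc j)) + Tsum n A B (Suc (Suc j))" using Tsum_step[OF sj] .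
    then have "stair n a A B t (Suc j) = B (Suc j)" using True mono sj by (simp add: stair_def)
    then show ?thesis using le[of j] j oB by fastforce
  next
    case False
    have "A j \<le> B j" using mono j by auto
    then have "stair n a A B t j = A j" using False by (simp add: stair_def)
    then show ?thesis using ge[of "Suc j"] j oA by fastforce
  qed
next
  have "(\<Sum>j=1..n. stair n a A B t j) = (\<Sum>j=1..n. A j) +
     (\<Sum>j=1..n. min (B j - A j) (max 0 (t - a - Tsum n A B (Suc j))))"
    by (simp add: stair_def sum.distrib)
  also have "(\<Sum>j=1..n. min (B j - A j) (max 0 (t - a - Tsum n A B (Suc j)))) = min (Tsum n A B 1) (max 0 (t - a))"
    by (rule sum_clamp[OF mono]) auto
  also have "\<dots> = t - a" using Tsum_1[OF sum] t by simp
  finally show "(\<Sum>j=1..n. stair n a A B t j) = t" using sA by simp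
qed

lemma discrete_in_Un:
  assumes "discrete_in A I" "discrete_in B I" shows "discrete_in (A \<union> B) I"
  unfolding discrete_in_def
proof
  fix x assume x: "x \<in> I"
  obtain e1 where e1: "e1 > 0" "finite (A \<inter> ball x e1)" using assms(1) x unfolding discrete_in_def by blast
  obtain e2 where e2: "e2 > 0" "finite (B \<inter> ball x e2)" using assms(2) x unfolding discrete_in_def by blast
  have "(A \<union> B) \<inter> ball x (min e1 e2) \<subseteq> (A \<inter> ball x e1) \<union> (B \<inter> ball x e2)" by auto
  then have "finite ((A \<union> B) \<inter> ball x (min e1 e2))" using e1 e2 finite_subset by blast
  then show "\<exists>e>0. finite ((A \<union> B) \<inter> ball x e)" using e1 e2 by (intro exI[of _ "min e1 e2"]) auto
qed

lemma discrete_compact: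
  fixes E I :: "real set"
  assumes "discrete_in E I" "{a..b} \<subseteq> I"
  shows "finite (E \<inter> {a..b})"
proof (rule ccontr)
  assume inf: "infinite (E \<inter> {a..b})"
  obtain x where x: "x \<in> {a..b}" "x islimpt (E \<inter> {a..b})"
    using Heine_Borel_imp_Bolzano_Weierstrass[OF compact_Icc inf] by blast
  obtain e where e: "e > 0" "finite (E \<inter> ball x e)" using assms x unfolding discrete_in_def by blast
  have "infinite (E \<inter> {a..b} \<inter> ball x e)" using x(2) e(1) islimpt_eq_infinite_ball by blast
  moreover have "E \<inter> {a..b} \<inter> ball x e \<subseteq> E \<inter> ball x e" by blast
  ultimately show False using e(2) finite_subset by blast
qed

lemma discrete_in_subset:
  assumes "discrete_in A I" "B \<subseteq> A" shows "discrete_in B I"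
  using assms unfolding discrete_in_def by (meson finite_subset inf_mono order_refl)

lemma discrete_in_seq_left:
  fixes c :: real
  assumes "\<forall>x\<in>I. c < x"
  shows "discrete_in {x. \<exists>m::nat. x = c + 1 / (real m + 1)} I"
  unfolding discrete_in_def
proof
  fix x0 assume x0: "x0 \<in> I"
  define d where "d = (x0 - c) / 2"
  have d: "d > 0" using assms x0 by (simp add: d_def)
  define N where "N = nat \<lceil>1 / d\<rceil>"
  have "{x. \<exists>m::nat. x = c + 1 / (real m + 1)} \<inter> ball x0 d \<subseteq> (\<lambda>m::nat. c + 1 / (real m + 1)) ` {..N}"
  proof
    fix x assume "x \<in> {x. \<exists>m::nat. x = c + 1 / (real m + 1)} \<inter> ball x0 d"
    then obtain m :: nat where m: "x = c + 1 / (real m + 1)" and dist: "dist x0 x < d" by auto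
    have "x0 - x < d" using dist by (simp add: dist_real_def)
    then have "1 / (real m + 1) > d" using m by (simp add: d_def field_simps)
    then have "real m + 1 < 1 / d" using d by (simp add: field_simps)
    then have "m \<le> N" unfolding N_def by linarith
    then show "x \<in> (\<lambda>m::nat. c + 1 / (real m + 1)) ` {..N}" using m by auto
  qed
  then have "finite ({x. \<exists>m::nat. x = c + 1 / (real m + 1)} \<inter> ball x0 d)" using finite_subset by blast
  then show "\<exists>e>0. finite ({x. \<exists>m::nat. x = c + 1 / (real m + 1)} \<inter> ball x0 e)" using d by blast
qed

lemma discrete_in_seq_right:
  fixes c :: real
  assumes "\<forall>x\<in>I. x < c"
  shows "discrete_in {x. \<exists>m::nat. x = c - 1 / (real m + 1)} I"
  unfolding discrete_in_def
proof
  fix x0 assume x0: "x0 \<in> I"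
  define d where "d = (c - x0) / 2"
  have d: "d > 0" using assms x0 by (simp add: d_def)
  define N where "N = nat \<lceil>1 / d\<rceil>"
  have "{x. \<exists>m::nat. x = c - 1 / (real m + 1)} \<inter> ball x0 d \<subseteq> (\<lambda>m::nat. c - 1 / (real m + 1)) ` {..N}"
  proof
    fix x assume "x \<in> {x. \<exists>m::nat. x = c - 1 / (real m + 1)} \<inter> ball x0 d"
    then obtain m :: nat where m: "x = c - 1 / (real m + 1)" and dist: "dist x0 x < d" by auto
    have "x - x0 < d" using dist by (simp add: dist_real_def)
    then have "1 / (real m + 1) > d" using m by (simp add: d_def field_simps)
    then have "real m + 1 < 1 / d" using d by (simp add: field_simps)
    then have "m \<le> N" unfolding N_def by linarith
    then show "x \<in> (\<lambda>m::nat. c - 1 / (real m + 1)) ` {..N}" using m by auto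
  qed
  then have "finite ({x. \<exists>m::nat. x = c - 1 / (real m + 1)} \<inter> ball x0 d)" using finite_subset by blast
  then show "\<exists>e>0. finite ({x. \<exists>m::nat. x = c - 1 / (real m + 1)} \<inter> ball x0 e)" using d by blast
qed

lemma discrete_in_nats:
  shows "discrete_in {x. \<exists>m::nat. x = real m} I"
  unfolding discrete_in_def
proof
  fix x0 :: real assume x0: "x0 \<in> I"
  define N where "N = nat \<lceil>x0 + 1\<rceil>"
  have "{x. \<exists>m::nat. x = real m} \<inter> ball x0 1 \<subseteq> real ` {..N}"
  proof
    fix x assume "x \<in> {x. \<exists>m::nat. x = real m} \<inter> ball x0 1"
    then obtain m :: nat where m: "x = real m" and dist: "dist x0 x < 1" by auto
    have "x < x0 + 1" using dist by (simp add: dist_real_def)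
    then have "m \<le> N" using m unfolding N_def by linarith
    then show "x \<in> real ` {..N}" using m by auto
  qed
  then have "finite ({x. \<exists>m::nat. x = real m} \<inter> ball x0 1)" using finite_subset by blast
  then show "\<exists>e>0. finite ({x. \<exists>m::nat. x = real m} \<inter> ball x0 e)" by (intro exI[of _ 1]) auto
qed

definition GL :: "real set \<Rightarrow> real set" where
  "GL I = (if Inf I \<in> I then {} else {x\<in>I. \<exists>m::nat. x = Inf I + 1 / (real m + 1)})"

definition GR :: "real set \<Rightarrow> real set" where
  "GR I = (if bdd_above I then (if Sup I \<in> I then {} else {x\<in>I. \<exists>m::nat. x = Sup I - 1 / (real m + 1)})
           else {x\<in>I. \<exists>m::nat. x = real m})"

definition Eset :: "nat \<Rightarrow> real set \<Rightarrow> real set \<Rightarrow> (real \<Rightarrow> nat \<Rightarrow> real) \<Rightarrow> real set" where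
  "Eset n I D Pt = D \<union> nondiff_set n I Pt \<union> GL I \<union> GR I"

lemma Eset_sub: "D \<subseteq> I \<Longrightarrow> Eset n I D Pt \<subseteq> I"
  by (auto simp: Eset_def GL_def GR_def nondiff_set_def split: if_splits)

lemma bdd_below_I: "I \<subseteq> {0..} \<Longrightarrow> bdd_below (I :: real set)"
  by (rule bdd_belowI[of _ 0]) auto

lemma Inf_frontier:
  fixes I :: "real set"
  assumes "I \<subseteq> {0..}" "Inf I \<in> I"
  shows "Inf I \<in> frontier I"
proof -
  have "Inf I \<notin> interior I"
  proof
    assume "Inf I \<in> interior I"
    then obtain e where e: "e > 0" "ball (Inf I) e \<subseteq> I" using mem_interior by blast
    then have "Inf I - e/2 \<in> I" by (auto simp: dist_real_def)
    then have "Inf I \<le> Inf I - e/2" using cInf_lower bdd_below_I[OF assms(1)] by blast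
    then show False using e by simp
  qed
  then show ?thesis using assms closure_subset unfolding frontier_def by auto
qed

lemma Sup_frontier:
  fixes I :: "real set"
  assumes "bdd_above I" "Sup I \<in> I"
  shows "Sup I \<in> frontier I"
proof -
  have "Sup I \<notin> interior I"
  proof
    assume "Sup I \<in> interior I"
    then obtain e where e: "e > 0" "ball (Sup I) e \<subseteq> I" using mem_interior by blast
    then have "Sup I + e/2 \<in> I" by (auto simp: dist_real_def)
    then have "Sup I + e/2 \<le> Sup I" using cSup_upper assms(1) by blast
    then show False using e by simp
  qed
  then show ?thesis using assms closure_subset unfolding frontier_def by auto
qed

lemma Eset_disc:
  fixes I :: "real set"
  assumes "I \<subseteq> {0..}" "discrete_in D I" "discrete_in (nondiff_set n I Pt) I"
  shows "discrete_in (Eset n I D Pt) I"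
proof -
  have bb: "bdd_below I" using bdd_below_I[OF assms(1)] .
  have gl: "discrete_in (GL I) I"
  proof (cases "Inf I \<in> I")
    case True then show ?thesis unfolding GL_def discrete_in_def by (auto intro!: exI[of _ "1::real"])
  next
    case False
    have "\<forall>x\<in>I. Inf I < x" using False cInf_lower[OF _ bb] by (metis order_le_less)
    then have "discrete_in {x. \<exists>m::nat. x = Inf I + 1 / (real m + 1)} I" by (rule discrete_in_seq_left)
    then show ?thesis by (rule discrete_in_subset) (use False in \<open>auto simp: GL_def\<close>)
  qed
  have gr: "discrete_in (GR I) I"
  proof (cases "bdd_above I")
    case True
    show ?thesis
    proof (cases "Sup I \<in> I")
      case True2: True
      then show ?thesis using True unfolding GR_def discrete_in_def by (auto intro!: exI[of _ "1::real"])
    next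
      case False
      have "\<forall>x\<in>I. x < Sup I" using False cSup_upper[OF _ True] by (metis order_le_less)
      then have "discrete_in {x. \<exists>m::nat. x = Sup I - 1 / (real m + 1)} I" by (rule discrete_in_seq_right)
      then show ?thesis by (rule discrete_in_subset) (use False True in \<open>auto simp: GR_def\<close>)
    qed
  next
    case False
    have "discrete_in {x. \<exists>m::nat. x = real m} I" by (rule discrete_in_nats)
    then show ?thesis by (rule discrete_in_subset) (use False in \<open>auto simp: GR_def\<close>)
  qed
  show ?thesis unfolding Eset_def
    by (intro discrete_in_Un assms gl gr)
qed

lemma Eset_right:
  fixes I :: "real set"
  assumes iv: "is_interval I" and I0: "I \<subseteq> {0..}" and x: "x \<in> I" and y: "y \<in> I" "x < y"
  shows "\<exists>e\<in>Eset n I D Pt. x < e"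
proof (cases "bdd_above I")
  case True
  have ne: "I \<noteq> {}" using x by blast
  show ?thesis
  proof (cases "Sup I \<in> I")
    case True2: True
    have "Sup I \<in> nondiff_set n I Pt" using Sup_frontier[OF True True2] True2 by (simp add: nondiff_set_def)
    moreover have "y \<le> Sup I" using cSup_upper[OF y(1) True] .
    ultimately show ?thesis using y by (auto simp: Eset_def intro!: bexI[of _ "Sup I"])
  next
    case False
    have "y \<le> Sup I" using cSup_upper[OF y(1) True] .
    then have xs: "x < Sup I" using y by simp
    obtain k :: nat where k: "k > 0" "inverse (real k) < Sup I - x"
      using ex_inverse_of_nat_less[of "Sup I - x"] xs by auto
    define m where "m = k - 1"
    have km: "real m + 1 = real k" using k(1) by (simp add: m_def)
    have m: "1 / (real m + 1) < Sup I - x" using k(2) km by (simp add: inverse_eq_divide)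
    define s where "s = Sup I - 1 / (real m + 1)"
    have sx: "x < s" using m by (simp add: s_def)
    have "s < Sup I" by (simp add: s_def)
    then obtain z where z: "z \<in> I" "s < z" using less_cSup_iff[OF ne True] by blast
    have sI: "s \<in> I" using iv x z sx unfolding is_interval_1 by (meson less_imp_le)
    have "s \<in> GR I" using True False sI by (auto simp: GR_def s_def)
    then show ?thesis using sx by (auto simp: Eset_def)
  qed
next
  case False
  define m where "m = nat \<lceil>x\<rceil> + 1"
  have mx: "x < real m" unfolding m_def by linarith
  obtain z where z: "z \<in> I" "real m < z" using False unfolding bdd_above_def by (meson not_le)
  have mI: "real m \<in> I" using iv x z mx unfolding is_interval_1 by (meson less_imp_le)
  have "real m \<in> GR I" using False mI by (auto simp: GR_def)
  then show ?thesis using mx by (auto simp: Eset_def)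
qed

lemma Eset_left:
  fixes I :: "real set"
  assumes iv: "is_interval I" and I0: "I \<subseteq> {0..}" and x: "x \<in> I" and y: "y \<in> I" "y < x"
  shows "\<exists>e\<in>Eset n I D Pt. e < x"
proof -
  have bb: "bdd_below I" using bdd_below_I[OF I0] .
  have ne: "I \<noteq> {}" using x by blast
  show ?thesis
  proof (cases "Inf I \<in> I")
    case True
    have "Inf I \<in> nondiff_set n I Pt" using Inf_frontier[OF I0 True] True by (simp add: nondiff_set_def)
    moreover have "Inf I \<le> y" using cInf_lower[OF y(1) bb] .
    ultimately show ?thesis using y by (auto simp: Eset_def intro!: bexI[of _ "Inf I"])
  next
    case False
    have "Inf I \<le> y" using cInf_lower[OF y(1) bb] .
    then have xs: "Inf I < x" using y by simp
    obtain k :: nat where k: "k > 0" "inverse (real k) < x - Inf I"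
      using ex_inverse_of_nat_less[of "x - Inf I"] xs by auto
    define m where "m = k - 1"
    have km: "real m + 1 = real k" using k(1) by (simp add: m_def)
    have m: "1 / (real m + 1) < x - Inf I" using k(2) km by (simp add: inverse_eq_divide)
    define s where "s = Inf I + 1 / (real m + 1)"
    have sx: "s < x" using m by (simp add: s_def)
    have "Inf I < s" by (simp add: s_def)
    then obtain z where z: "z \<in> I" "z < s" using cInf_less_iff[OF ne bb] by blast
    have sI: "s \<in> I" using iv x z sx unfolding is_interval_1 by (meson less_imp_le)
    have "s \<in> GL I" using False sI by (auto simp: GL_def s_def)
    then show ?thesis using sx by (auto simp: Eset_def)
  qed
qed

lemma affine_extend:
  fixes f :: "real \<Rightarrow> real"
  assumes f: "continuous_on {a..b} f" and ab: "a < b" and eq: "\<forall>t\<in>{a<..<b}. f t = c + d * t"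
    and t: "t \<in> {a..b}"
  shows "f t = c + d * t"
proof -
  have "continuous_on (closure {a<..<b}) (\<lambda>t. f t - (c + d * t))"
    using ab f by (auto intro!: continuous_intros)
  then have "(\<lambda>t. f t - (c + d * t)) t = 0"
    by (rule continuous_constant_on_closure) (use eq ab t in auto)
  then show ?thesis by simp
qed

lemma interval_between:
  fixes I :: "real set"
  assumes "is_interval I" "a \<in> I" "b \<in> I" "a \<le> t" "t \<le> b" shows "t \<in> I"
  using assms unfolding is_interval_1 by blast

locale gsetup =
  fixes n :: nat and I D :: "real set" and Pt :: "real \<Rightarrow> nat \<Rightarrow> real"
  assumes n2: "n \<ge> 2" and iv: "is_interval I" and I0: "I \<subseteq> {0..}"
    and g: "gen_n_system n I Pt" and DI: "D \<subseteq> I" and Dd: "discrete_in D I"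

context gsetup
begin

abbreviation "EE \<equiv> Eset n I D Pt"

lemma g_cpl: "cont_pw_linear n I Pt"
  using g unfolding gen_n_system_def by (rule conjunct1)

lemma g_os: "ordered_sum n I Pt"
  using g unfolding gen_n_system_def by (elim conjE)

lemma EE_sub: "EE \<subseteq> I" using Eset_sub[OF DI] .

lemma N_sub: "nondiff_set n I Pt \<subseteq> EE" by (auto simp: Eset_def)
lemma D_sub: "D \<subseteq> EE" by (auto simp: Eset_def)

lemma EE_disc: "discrete_in EE I"
proof (rule Eset_disc[OF I0 Dd])
  show "discrete_in (nondiff_set n I Pt) I" using g_cpl unfolding cont_pw_linear_def by (elim conjE)
qed

lemma EE_fin: assumes "a \<in> I" "b \<in> I" shows "finite (EE \<inter> {a..b})"
proof (rule discrete_compact[OF EE_disc])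
  show "{a..b} \<subseteq> I" using interval_between[OF iv assms] by auto
qed

lemma next_E:
  assumes x: "x \<in> I" and y: "y \<in> I" "x < y"
  shows "\<exists>b\<in>EE. x < b \<and> (\<forall>e\<in>EE. x < e \<longrightarrow> b \<le> e)"
proof -
  obtain e0 where e0: "e0 \<in> EE" "x < e0" using Eset_right[OF iv I0 x y] by blast
  have e0I: "e0 \<in> I" using e0 EE_sub by blast
  define F where "F = EE \<inter> {x<..e0}"
  have "F \<subseteq> EE \<inter> {x..e0}" by (auto simp: F_def)
  then have fF: "finite F" using EE_fin[OF x e0I] finite_subset by blast
  have neF: "F \<noteq> {}" using e0 by (auto simp: F_def)
  define b where "b = Min F"
  have bF: "b \<in> F" using Min_in[OF fF neF] b_def by simp
  show ?thesis
  proof (intro bexI[of _ b] conjI ballI impI)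
    show "b \<in> EE" "x < b" using bF by (auto simp: F_def)
    fix e assume e: "e \<in> EE" "x < e"
    show "b \<le> e"
    proof (cases "e \<le> e0")
      case True then have "e \<in> F" using e by (auto simp: F_def)
      then show ?thesis using Min_le[OF fF] b_def by simp
    next
      case False then show ?thesis using bF by (auto simp: F_def)
    qed
  qed
qed

lemma prev_E:
  assumes x: "x \<in> I" and y: "y \<in> I" "y < x"
  shows "\<exists>a\<in>EE. a < x \<and> (\<forall>e\<in>EE. e < x \<longrightarrow> e \<le> a)"
proof -
  obtain e0 where e0: "e0 \<in> EE" "e0 < x" using Eset_left[OF iv I0 x y] by blast
  have e0I: "e0 \<in> I" using e0 EE_sub by blast
  define F where "F = EE \<inter> {e0..<x}"
  have "F \<subseteq> EE \<inter> {e0..x}" by (auto simp: F_def)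
  then have fF: "finite F" using EE_fin[OF e0I x] finite_subset by blast
  have neF: "F \<noteq> {}" using e0 by (auto simp: F_def)
  define a where "a = Max F"
  have aF: "a \<in> F" using Max_in[OF fF neF] a_def by simp
  show ?thesis
  proof (intro bexI[of _ a] conjI ballI impI)
    show "a \<in> EE" "a < x" using aF by (auto simp: F_def)
    fix e assume e: "e \<in> EE" "e < x"
    show "e \<le> a"
    proof (cases "e0 \<le> e")
      case True then have "e \<in> F" using e by (auto simp: F_def)
      then show ?thesis using Max_ge[OF fF] a_def by simp
    next
      case False then show ?thesis using aF by (auto simp: F_def)
    qed
  qed
qed

definition consE :: "real \<Rightarrow> real \<Rightarrow> bool" where
  "consE a b \<longleftrightarrow> a \<in> EE \<and> b \<in> EE \<and> a < b \<and> (\<forall>e\<in>EE. \<not> (a < e \<and> e < b))"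

lemma g_G2: "\<forall>H. diff_subinterval n I Pt H \<longrightarrow>
        (\<exists>lr ur. 1 \<le> lr \<and> lr \<le> ur \<and> ur \<le> n \<and>
           (\<forall>j\<in>{lr..ur}. \<forall>x\<in>H. Pt x j = Pt x lr) \<and>
           (\<forall>j\<in>{lr..ur}. \<forall>x\<in>H. \<forall>y\<in>H. Pt y j - Pt x j = (y - x) / real (ur - lr + 1)) \<and>
           (\<forall>j\<in>{1..n}. j \<notin> {lr..ur} \<longrightarrow> (\<forall>x\<in>H. \<forall>y\<in>H. Pt y j = Pt x j)))"
  using g unfolding gen_n_system_def by (elim conjE)

lemma g_G3: "\<forall>q\<in>interior I. q \<in> nondiff_set n I Pt \<longrightarrow>
        (\<forall>lr ur ls us. 1 \<le> lr \<longrightarrow> lr \<le> ur \<longrightarrow> ur \<le> n \<longrightarrow> 1 \<le> ls \<longrightarrow> ls \<le> us \<longrightarrow> us \<le> n \<longrightarrow>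
           (\<forall>j\<in>{lr..ur}. (comp Pt j has_real_derivative 1 / real (ur - lr + 1)) (at_left q)) \<longrightarrow>
           (\<forall>j\<in>{ls..us}. (comp Pt j has_real_derivative 1 / real (us - ls + 1)) (at_right q)) \<longrightarrow>
           lr < us \<longrightarrow> (\<forall>j\<in>{lr..us}. Pt q j = Pt q lr))"
  using g unfolding gen_n_system_def by (elim conjE)

lemma g_cont: "\<forall>j\<in>{1..n}. continuous_on I (comp Pt j)"
  using g_cpl unfolding cont_pw_linear_def by (elim conjE)

lemma Pt_gap:
  assumes c: "consE a b"
  shows "\<exists>L U. 1 \<le> L \<and> L \<le> U \<and> U \<le> n \<and>
     (\<forall>t\<in>{a..b}. \<forall>j\<in>{1..n}. Pt t j = Pt a j + (if L \<le> j \<and> j \<le> U then (t - a) / real (U - L + 1) else 0)) \<and>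
     (\<forall>j\<in>{L..U}. Pt a j = Pt a L)"
proof -
  have ab: "a \<in> EE" "b \<in> EE" "a < b" and no: "\<forall>e\<in>EE. \<not> (a < e \<and> e < b)"
    using c unfolding consE_def by auto
  have aI: "a \<in> I" and bI: "b \<in> I" using ab EE_sub by auto
  define H where "H = {a<..<b}"
  have HI: "H \<subseteq> I" using interval_between[OF iv aI bI] by (auto simp: H_def)
  have Hnd: "q \<notin> nondiff_set n I Pt" if "q \<in> H" for q
    using that no N_sub by (auto simp: H_def)
  have dH: "\<forall>q\<in>H. \<forall>j\<in>{1..n}. comp Pt j differentiable (at q)"
  proof (intro ballI)
    fix q j assume q: "q \<in> H" and j: "j \<in> {1..n}"
    have "q \<in> I" using q HI by blast
    then show "comp Pt j differentiable (at q)" using Hnd[OF q] j by (auto simp: nondiff_set_def)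
  qed
  define m where "m = (a + b) / 2"
  have mH: "m \<in> H" using ab by (simp add: H_def m_def)
  have dsi: "diff_subinterval n I Pt H"
    unfolding diff_subinterval_def
  proof (intro conjI)
    show "is_interval H" unfolding is_interval_1 H_def by auto
    show "open H" by (simp add: H_def)
    show "H \<noteq> {}" using mH by blast
  qed (use HI dH in auto)
  obtain lr ur where lu: "1 \<le> lr" "lr \<le> ur" "ur \<le> n"
    and eqb: "\<forall>j\<in>{lr..ur}. \<forall>x\<in>H. Pt x j = Pt x lr"
    and slope: "\<forall>j\<in>{lr..ur}. \<forall>x\<in>H. \<forall>y\<in>H. Pt y j - Pt x j = (y - x) / real (ur - lr + 1)"
    and flat: "\<forall>j\<in>{1..n}. j \<notin> {lr..ur} \<longrightarrow> (\<forall>x\<in>H. \<forall>y\<in>H. Pt y j = Pt x j)"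
    using g_G2 dsi by blast
  define k where "k = real (ur - lr + 1)"
  define cc where "cc j = (if lr \<le> j \<and> j \<le> ur then 1 / k else 0)" for j
  have onH: "Pt t j = (Pt m j - cc j * m) + cc j * t" if t: "t \<in> H" and j: "j \<in> {1..n}" for t j
  proof (cases "lr \<le> j \<and> j \<le> ur")
    case True
    then have "Pt t j - Pt m j = (t - m) / k" using slope t mH by (simp add: k_def)
    moreover have "k > 0" by (simp add: k_def)
    ultimately show ?thesis using True by (simp add: cc_def field_simps)
  next
    case False
    then have "j \<notin> {lr..ur}" by auto
    then have "Pt t j = Pt m j" using flat t mH j by blast
    moreover have "cc j = 0" using False unfolding cc_def by presburger
    ultimately show ?thesis by simp
  qed
  have onab: "Pt t j = (Pt m j - cc j * m) + cc j * t" if t: "t \<in> {a..b}" and j: "j \<in> {1..n}" for t j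
  proof -
    have sub: "{a..b} \<subseteq> I" using interval_between[OF iv aI bI] by auto
    have "continuous_on {a..b} (comp Pt j)"
      using g_cont j continuous_on_subset[OF _ sub] by blast
    then have ct: "continuous_on {a..b} (\<lambda>t. Pt t j)" by (simp add: comp_def)
    show ?thesis
      by (rule affine_extend[OF ct ab(3) _ t]) (use onH j in \<open>auto simp: H_def\<close>)
  qed
  have A: "\<forall>t\<in>{a..b}. \<forall>j\<in>{1..n}. Pt t j = Pt a j + (if lr \<le> j \<and> j \<le> ur then (t - a) / real (ur - lr + 1) else 0)"
  proof (intro ballI)
    fix t j assume t: "t \<in> {a..b}" and j: "j \<in> {1..n}"
    have "a \<in> {a..b}" using ab by simp
    from onab[OF t j] onab[OF this j]
    have "Pt t j = Pt a j + cc j * (t - a)" by (simp add: algebra_simps)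
    then show "Pt t j = Pt a j + (if lr \<le> j \<and> j \<le> ur then (t - a) / real (ur - lr + 1) else 0)"
      by (simp add: cc_def k_def)
  qed
  have B: "\<forall>j\<in>{lr..ur}. Pt a j = Pt a lr"
  proof
    fix j assume j: "j \<in> {lr..ur}"
    have j1: "j \<in> {1..n}" "lr \<in> {1..n}" using j lu by auto
    have "a \<in> {a..b}" using ab by simp
    have "Pt m j = Pt m lr" using eqb j mH by blast
    moreover have "cc j = cc lr" using j lu by (simp add: cc_def)
    ultimately show "Pt a j = Pt a lr"
      using onab[OF \<open>a \<in> {a..b}\<close> j1(1)] onab[OF \<open>a \<in> {a..b}\<close> j1(2)] by simp
  qed
  show ?thesis using lu A B by blast
qed

end

context gsetup
begin

lemma notE_interior: assumes "x \<in> I" "x \<notin> EE" shows "x \<in> interior I"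
proof -
  have "x \<notin> nondiff_set n I Pt" using assms N_sub by blast
  then have "x \<notin> frontier I" using assms(1) by (simp add: nondiff_set_def)
  then show ?thesis using assms(1) closure_subset unfolding frontier_def by auto
qed

lemma gap_right:
  assumes x: "x \<in> I" and y: "y \<in> I" "x < y"
  shows "\<exists>a b. consE a b \<and> a \<le> x \<and> x < b \<and> (x \<in> EE \<longrightarrow> a = x)"
proof -
  obtain b where b: "b \<in> EE" "x < b" "\<forall>e\<in>EE. x < e \<longrightarrow> b \<le> e" using next_E[OF x y] by blast
  show ?thesis
  proof (cases "x \<in> EE")
    case True
    have "consE x b" unfolding consE_def using True b by force
    then show ?thesis using b by auto
  next
    case False
    obtain y' where y': "y' \<in> I" "y' < x" using interior_sides(1)[OF notE_interior[OF x False]] by blast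
    obtain a where a: "a \<in> EE" "a < x" "\<forall>e\<in>EE. e < x \<longrightarrow> e \<le> a" using prev_E[OF x y'] by blast
    have "consE a b"
      unfolding consE_def
    proof (intro conjI ballI a(1) b(1))
      show "a < b" using a b by simp
      fix e assume e: "e \<in> EE"
      show "\<not> (a < e \<and> e < b)"
      proof
        assume ae: "a < e \<and> e < b"
        consider "e < x" | "e = x" | "x < e" by linarith
        then show False
        proof cases
          case 1 then show False using a(3) e ae by fastforce
        next
          case 2 then show False using e False by simp
        next
          case 3 then show False using b(3) e ae by fastforce
        qed
      qed
    qed
    then show ?thesis using a b False by (intro exI[of _ a] exI[of _ b]) auto
  qed
qed

lemma gap_left:
  assumes x: "x \<in> I" and y: "y \<in> I" "y < x"
  shows "\<exists>a b. consE a b \<and> a < x \<and> x \<le> b \<and> (x \<in> EE \<longrightarrow> b = x)"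
proof -
  obtain a where a: "a \<in> EE" "a < x" "\<forall>e\<in>EE. e < x \<longrightarrow> e \<le> a" using prev_E[OF x y] by blast
  show ?thesis
  proof (cases "x \<in> EE")
    case True
    have "consE a x" unfolding consE_def using True a by force
    then show ?thesis using a by auto
  next
    case False
    obtain y' where y': "y' \<in> I" "x < y'" using interior_sides(2)[OF notE_interior[OF x False]] by blast
    obtain b where b: "b \<in> EE" "x < b" "\<forall>e\<in>EE. x < e \<longrightarrow> b \<le> e" using next_E[OF x y'] by blast
    have "consE a b"
      unfolding consE_def
    proof (intro conjI ballI a(1) b(1))
      show "a < b" using a b by simp
      fix e assume e: "e \<in> EE"
      show "\<not> (a < e \<and> e < b)"
      proof
        assume ae: "a < e \<and> e < b"
        consider "e < x" | "e = x" | "x < e" by linarith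
        then show False
        proof cases
          case 1 then show False using a(3) e ae by fastforce
        next
          case 2 then show False using e False by simp
        next
          case 3 then show False using b(3) e ae by fastforce
        qed
      qed
    qed
    then show ?thesis using a b False by (intro exI[of _ a] exI[of _ b]) auto
  qed
qed

definition nxt :: "real \<Rightarrow> real" where
  "nxt x = (SOME b. b \<in> EE \<and> x < b \<and> (\<forall>e\<in>EE. x < e \<longrightarrow> b \<le> e))"

definition prv :: "real \<Rightarrow> real" where
  "prv x = (SOME a. a \<in> EE \<and> a < x \<and> (\<forall>e\<in>EE. e < x \<longrightarrow> e \<le> a))"

definition Pn :: "real \<Rightarrow> nat \<Rightarrow> real" where
  "Pn t j = (if t \<in> EE then Pt t j else stair n (prv t) (Pt (prv t)) (Pt (nxt t)) t j)"

lemma consE_I: assumes "consE a b" shows "a \<in> I" "b \<in> I" "a < b" "{a..b} \<subseteq> I"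
proof -
  show aI: "a \<in> I" and bI: "b \<in> I" "a < b" using assms EE_sub unfolding consE_def by auto
  show "{a..b} \<subseteq> I" using interval_between[OF iv aI bI(1)] by auto
qed

lemma gap_mono: assumes "consE a b" shows "\<forall>j\<in>{1..n}. Pt a j \<le> Pt b j"
proof
  fix j assume j: "j \<in> {1..n}"
  obtain L U where LU: "\<forall>t\<in>{a..b}. \<forall>j\<in>{1..n}. Pt t j = Pt a j + (if L \<le> j \<and> j \<le> U then (t - a) / real (U - L + 1) else 0)"
    using Pt_gap[OF assms] by blast
  have ab: "a < b" using consE_I[OF assms] by simp
  then have "b \<in> {a..b}" by simp
  then have "Pt b j = Pt a j + (if L \<le> j \<and> j \<le> U then (b - a) / real (U - L + 1) else 0)" using LU j by blast
  then show "Pt a j \<le> Pt b j" using ab by simp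
qed

lemma gap_sum: assumes "consE a b" shows "(\<Sum>j=1..n. Pt b j) - (\<Sum>j=1..n. Pt a j) = b - a"
proof -
  have "a \<in> I" "b \<in> I" using consE_I[OF assms] by auto
  then show ?thesis using g_os unfolding ordered_sum_def by simp
qed

lemma P_gap:
  assumes c: "consE a b" and t: "t \<in> {a..b}" and j: "j \<in> {1..n}"
  shows "Pn t j = stair n a (Pt a) (Pt b) t j"
proof -
  have ab: "a \<in> EE" "b \<in> EE" "a < b" and no: "\<forall>e\<in>EE. \<not> (a < e \<and> e < b)"
    using c unfolding consE_def by auto
  consider "t = a" | "t = b" | "a < t \<and> t < b" using t by fastforce
  then show ?thesis
  proof cases
    case 1
    then show ?thesis using ab stair_at_a[OF gap_mono[OF c] j] by (simp add: Pn_def)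
  next
    case 2
    then show ?thesis using ab stair_at_b[OF gap_mono[OF c] j gap_sum[OF c]] by (simp add: Pn_def)
  next
    case 3
    then have tE: "t \<notin> EE" using no by blast
    have pa: "a \<in> EE \<and> a < t \<and> (\<forall>e\<in>EE. e < t \<longrightarrow> e \<le> a)"
      using ab 3 no by force
    have "prv t \<in> EE \<and> prv t < t \<and> (\<forall>e\<in>EE. e < t \<longrightarrow> e \<le> prv t)"
      unfolding prv_def by (rule someI[of _ a]) (rule pa)
    then have "prv t = a" using pa no 3 by force
    have nb: "b \<in> EE \<and> t < b \<and> (\<forall>e\<in>EE. t < e \<longrightarrow> b \<le> e)"
      using ab 3 no by force
    have "nxt t \<in> EE \<and> t < nxt t \<and> (\<forall>e\<in>EE. t < e \<longrightarrow> nxt t \<le> e)"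
      unfolding nxt_def by (rule someI[of _ b]) (rule nb)
    then have "nxt t = b" using nb no 3 by force
    show ?thesis using tE \<open>prv t = a\<close> \<open>nxt t = b\<close> by (simp add: Pn_def)
  qed
qed

end

context gsetup
begin

lemma RA_gap:
  assumes c: "consE a b" and x: "a \<le> x" "x < b"
  shows "\<exists>r. rightaff n I Pn x r \<and> Tsum n (Pt a) (Pt b) (Suc r) \<le> x - a \<and> x - a < Tsum n (Pt a) (Pt b) r"
proof -
  have mono: "\<forall>j\<in>{1..n}. Pt a j \<le> Pt b j" using gap_mono[OF c] .
  have sum: "(\<Sum>j=1..n. Pt b j) - (\<Sum>j=1..n. Pt a j) = b - a" using gap_sum[OF c] .
  obtain r where r: "r \<in> {1..n}" "Tsum n (Pt a) (Pt b) (Suc r) \<le> x - a" "x - a < Tsum n (Pt a) (Pt b) r"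
    and main: "\<forall>y j. x \<le> y \<and> y < a + Tsum n (Pt a) (Pt b) r \<longrightarrow> j \<in> {1..n} \<longrightarrow>
        stair n a (Pt a) (Pt b) y j = stair n a (Pt a) (Pt b) x j + (if j = r then y - x else 0)"
    using stair_right[OF mono sum x] by blast
  have Tr: "Tsum n (Pt a) (Pt b) r \<le> b - a"
    using Tsum_anti[OF mono, of 1 r] Tsum_1[OF sum] r(1) by simp
  have "rightaff n I Pn x r"
    unfolding rightaff_def
  proof (intro conjI r(1) exI[of _ "a + Tsum n (Pt a) (Pt b) r - x"] allI impI)
    show "0 < a + Tsum n (Pt a) (Pt b) r - x" using r by simp
    fix y assume y: "x \<le> y \<and> y < x + (a + Tsum n (Pt a) (Pt b) r - x)"
    have yab: "y \<in> {a..b}" using y x Tr by auto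
    have xab: "x \<in> {a..b}" using x by auto
    show "y \<in> I" using yab consE_I[OF c] by blast
    show "\<forall>j\<in>{1..n}. Pn y j = Pn x j + (if j = r then y - x else 0)"
    proof
      fix j assume j: "j \<in> {1..n}"
      have "stair n a (Pt a) (Pt b) y j = stair n a (Pt a) (Pt b) x j + (if j = r then y - x else 0)"
        using main[rule_format, of y j] y j by simp
      then show "Pn y j = Pn x j + (if j = r then y - x else 0)"
        using P_gap[OF c yab j] P_gap[OF c xab j] by simp
    qed
  qed
  then show ?thesis using r by blast
qed

lemma LA_gap:
  assumes c: "consE a b" and x: "a < x" "x \<le> b"
  shows "\<exists>r. leftaff n I Pn x r \<and> Tsum n (Pt a) (Pt b) (Suc r) < x - a \<and> x - a \<le> Tsum n (Pt a) (Pt b) r"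
proof -
  have mono: "\<forall>j\<in>{1..n}. Pt a j \<le> Pt b j" using gap_mono[OF c] .
  have sum: "(\<Sum>j=1..n. Pt b j) - (\<Sum>j=1..n. Pt a j) = b - a" using gap_sum[OF c] .
  obtain r where r: "r \<in> {1..n}" "Tsum n (Pt a) (Pt b) (Suc r) < x - a" "x - a \<le> Tsum n (Pt a) (Pt b) r"
    and main: "\<forall>y j. a + Tsum n (Pt a) (Pt b) (Suc r) < y \<and> y \<le> x \<longrightarrow> j \<in> {1..n} \<longrightarrow>
        stair n a (Pt a) (Pt b) y j = stair n a (Pt a) (Pt b) x j + (if j = r then y - x else 0)"
    using stair_left[OF mono sum x] by blast
  have T0: "0 \<le> Tsum n (Pt a) (Pt b) (Suc r)" using Tsum_nonneg[OF mono, of "Suc r"] by simp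
  have "leftaff n I Pn x r"
    unfolding leftaff_def
  proof (intro conjI r(1) exI[of _ "x - a - Tsum n (Pt a) (Pt b) (Suc r)"] allI impI)
    show "0 < x - a - Tsum n (Pt a) (Pt b) (Suc r)" using r by simp
    fix y assume y: "x - (x - a - Tsum n (Pt a) (Pt b) (Suc r)) < y \<and> y \<le> x"
    have yab: "y \<in> {a..b}" using y x T0 by auto
    have xab: "x \<in> {a..b}" using x by auto
    show "y \<in> I" using yab consE_I[OF c] by blast
    show "\<forall>j\<in>{1..n}. Pn y j = Pn x j + (if j = r then y - x else 0)"
    proof
      fix j assume j: "j \<in> {1..n}"
      have "a + Tsum n (Pt a) (Pt b) (Suc r) < y \<and> y \<le> x" using y by simp
      then have "stair n a (Pt a) (Pt b) y j = stair n a (Pt a) (Pt b) x j + (if j = r then y - x else 0)"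
        using main j by blast
      then show "Pn y j = Pn x j + (if j = r then y - x else 0)"
        using P_gap[OF c yab j] P_gap[OF c xab j] by simp
    qed
  qed
  then show ?thesis using r by blast
qed

lemma Pn_os: "ordered_sum n I Pn"
  unfolding ordered_sum_def
proof
  fix q assume q: "q \<in> I"
  show "0 \<le> Pn q 1 \<and> (\<forall>j\<in>{1..<n}. Pn q j \<le> Pn q (Suc j)) \<and> (\<Sum>j = 1..n. Pn q j) = q"
  proof (cases "q \<in> EE")
    case True
    then have "\<forall>j. Pn q j = Pt q j" by (simp add: Pn_def)
    then show ?thesis using g_os q unfolding ordered_sum_def by simp
  next
    case False
    obtain y where y: "y \<in> I" "q < y" using interior_sides(2)[OF notE_interior[OF q False]] by blast
    obtain a b where c: "consE a b" and ab: "a \<le> q" "q < b" using gap_right[OF q y] by blast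
    have aI: "a \<in> I" and bI: "b \<in> I" using consE_I[OF c] by auto
    have osA: "0 \<le> Pt a 1" "\<forall>j\<in>{1..<n}. Pt a j \<le> Pt a (Suc j)" "(\<Sum>j=1..n. Pt a j) = a"
      using g_os aI unfolding ordered_sum_def by auto
    have osB: "\<forall>j\<in>{1..<n}. Pt b j \<le> Pt b (Suc j)"
      using g_os bI unfolding ordered_sum_def by auto
    have n1: "1 \<le> n" using n2 by simp
    have st: "0 \<le> stair n a (Pt a) (Pt b) q 1 \<and> (\<forall>j\<in>{1..<n}. stair n a (Pt a) (Pt b) q j \<le> stair n a (Pt a) (Pt b) q (Suc j)) \<and>
         (\<Sum>j=1..n. stair n a (Pt a) (Pt b) q j) = q"
      by (rule stair_os[OF gap_mono[OF c] gap_sum[OF c] osA(3) osA(1) osA(2) osB]) (use ab n1 in auto)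
    have qab: "q \<in> {a..b}" using ab by auto
    have eq: "Pn q j = stair n a (Pt a) (Pt b) q j" if "j \<in> {1..n}" for j using P_gap[OF c qab that] .
    have "0 \<le> Pn q 1" using st eq[of 1] n1 by simp
    moreover have "\<forall>j\<in>{1..<n}. Pn q j \<le> Pn q (Suc j)"
    proof
      fix j assume j: "j \<in> {1..<n}"
      then have "j \<in> {1..n}" "Suc j \<in> {1..n}" by auto
      then show "Pn q j \<le> Pn q (Suc j)" using st j eq by simp
    qed
    moreover have "(\<Sum>j = 1..n. Pn q j) = q" using st eq by simp
    ultimately show ?thesis by blast
  qed
qed

end

context gsetup
begin

lemma Pt_junction:
  assumes xi: "x \<in> interior I" and c1: "consE a x" and c2: "consE x b"
    and LU1: "1 \<le> L1" "L1 \<le> U1" "U1 \<le> n"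
    and F1: "\<forall>t\<in>{a..x}. \<forall>j\<in>{1..n}. Pt t j = Pt a j + (if L1 \<le> j \<and> j \<le> U1 then (t - a) / real (U1 - L1 + 1) else 0)"
    and B1: "\<forall>j\<in>{L1..U1}. Pt a j = Pt a L1"
    and LU2: "1 \<le> L2" "L2 \<le> U2" "U2 \<le> n"
    and F2: "\<forall>t\<in>{x..b}. \<forall>j\<in>{1..n}. Pt t j = Pt x j + (if L2 \<le> j \<and> j \<le> U2 then (t - x) / real (U2 - L2 + 1) else 0)"
    and lt: "L1 < U2"
  shows "\<forall>j\<in>{L1..U2}. Pt x j = Pt x L1"
proof -
  have ax: "a < x" using consE_I[OF c1] by simp
  have xb: "x < b" using consE_I[OF c2] by simp
  have xI: "x \<in> I" using xi interior_subset by blast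
  define k1 where "k1 = real (U1 - L1 + 1)"
  define k2 where "k2 = real (U2 - L2 + 1)"
  have k1: "k1 > 0" and k2: "k2 > 0" by (simp_all add: k1_def k2_def)
  define d1 where "d1 j = (if L1 \<le> j \<and> j \<le> U1 then 1 / k1 else 0)" for j
  define d2 where "d2 j = (if L2 \<le> j \<and> j \<le> U2 then 1 / k2 else 0)" for j
  have left: "comp Pt j y = comp Pt j x + (y - x) * d1 j" if j: "j \<in> {1..n}" and y: "x - (x - a) < y" "y < x" for j y
  proof -
    have ya: "y \<in> {a..x}" and xa: "x \<in> {a..x}" using y ax by auto
    have "Pt y j = Pt a j + (if L1 \<le> j \<and> j \<le> U1 then (y - a) / k1 else 0)"
      "Pt x j = Pt a j + (if L1 \<le> j \<and> j \<le> U1 then (x - a) / k1 else 0)"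
      using F1[rule_format, OF ya j] F1[rule_format, OF xa j] unfolding k1_def by simp_all
    then show ?thesis unfolding d1_def comp_def using k1 by (simp add: field_simps)
  qed
  have right: "comp Pt j y = comp Pt j x + (y - x) * d2 j" if j: "j \<in> {1..n}" and y: "x < y" "y < x + (b - x)" for j y
  proof -
    have yb: "y \<in> {x..b}" using y by auto
    have "Pt y j = Pt x j + (if L2 \<le> j \<and> j \<le> U2 then (y - x) / k2 else 0)"
      using F2[rule_format, OF yb j] unfolding k2_def by simp
    then show ?thesis unfolding d2_def comp_def using k2 by (simp add: field_simps)
  qed
  show ?thesis
  proof (cases "x \<in> nondiff_set n I Pt")
    case True
    have dl: "\<forall>j\<in>{L1..U1}. (comp Pt j has_real_derivative 1 / real (U1 - L1 + 1)) (at_left x)"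
    proof
      fix j assume j: "j \<in> {L1..U1}"
      then have j': "j \<in> {1..n}" using LU1 by auto
      have "(comp Pt j has_real_derivative d1 j) (at_left x)"
        by (rule left_deriv_affine[of "x - a"]) (use ax left j' in auto)
      then show "(comp Pt j has_real_derivative 1 / real (U1 - L1 + 1)) (at_left x)"
        using j by (simp add: d1_def k1_def)
    qed
    have dr: "\<forall>j\<in>{L2..U2}. (comp Pt j has_real_derivative 1 / real (U2 - L2 + 1)) (at_right x)"
    proof
      fix j assume j: "j \<in> {L2..U2}"
      then have j': "j \<in> {1..n}" using LU2 by auto
      have "(comp Pt j has_real_derivative d2 j) (at_right x)"
        by (rule right_deriv_affine[of "b - x"]) (use xb right j' in auto)
      then show "(comp Pt j has_real_derivative 1 / real (U2 - L2 + 1)) (at_right x)"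
        using j by (simp add: d2_def k2_def)
    qed
    show ?thesis using g_G3[rule_format, OF xi True LU1 LU2 dl[rule_format] dr[rule_format] lt] by blast
  next
    case False
    then have dif: "\<forall>j\<in>{1..n}. comp Pt j differentiable (at x)" using xI by (simp add: nondiff_set_def)
    have eqd: "d1 j = d2 j" if j: "j \<in> {1..n}" for j
    proof -
      have D: "(comp Pt j has_real_derivative deriv (comp Pt j) x) (at x)"
        using dif j DERIV_deriv_iff_real_differentiable by blast
      have "deriv (comp Pt j) x = d1 j"
      proof (rule left_deriv_unique[of "x - a"])
        show "(comp Pt j has_real_derivative deriv (comp Pt j) x) (at_left x)"
          using D has_field_derivative_at_within by blast
      qed (use ax left j in auto)
      moreover have "deriv (comp Pt j) x = d2 j"
      proof (rule right_deriv_unique[of "b - x"])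
        show "(comp Pt j has_real_derivative deriv (comp Pt j) x) (at_right x)"
          using D has_field_derivative_at_within by blast
      qed (use xb right j in auto)
      ultimately show ?thesis by simp
    qed
    have pos1: "d1 j \<noteq> 0 \<longleftrightarrow> L1 \<le> j \<and> j \<le> U1" for j using k1 by (simp add: d1_def)
    have pos2: "d2 j \<noteq> 0 \<longleftrightarrow> L2 \<le> j \<and> j \<le> U2" for j using k2 by (simp add: d2_def)
    have "L2 \<le> L1" using eqd[of L1] pos1[of L1] pos2[of L1] LU1 by auto
    moreover have "L1 \<le> L2" using eqd[of L2] pos1[of L2] pos2[of L2] LU2 by auto
    moreover have "U1 \<le> U2" using eqd[of U1] pos1[of U1] pos2[of U1] LU1 by auto
    moreover have "U2 \<le> U1" using eqd[of U2] pos1[of U2] pos2[of U2] LU2 by auto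
    ultimately have eqLU: "L1 = L2" "U1 = U2" by auto
    show ?thesis
    proof
      fix j assume j: "j \<in> {L1..U2}"
      then have jb: "L1 \<le> j \<and> j \<le> U1" using eqLU by auto
      have j': "j \<in> {1..n}" "L1 \<in> {1..n}" using jb LU1 by auto
      have xa: "x \<in> {a..x}" using ax by auto
      have "Pt x j = Pt a j + (x - a) / real (U1 - L1 + 1)" "Pt x L1 = Pt a L1 + (x - a) / real (U1 - L1 + 1)"
        using F1[rule_format, OF xa j'(1)] F1[rule_format, OF xa j'(2)] jb LU1 by simp_all
      moreover have "Pt a j = Pt a L1" using B1 jb atLeastAtMost_iff by blast
      ultimately show "Pt x j = Pt x L1" by simp
    qed
  qed
qed

end

context gsetup
begin

lemma J_Pn:
  assumes xi: "x \<in> interior I" and lr: "leftaff n I Pn x r" and rr: "rightaff n I Pn x s" and rs: "r < s"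
  shows "\<forall>j\<in>{r..s}. Pn x j = Pn x r"
proof -
  have xI: "x \<in> I" using xi interior_subset by blast
  obtain yl where yl: "yl \<in> I" "yl < x" using interior_sides(1)[OF xi] by blast
  obtain yr where yr: "yr \<in> I" "x < yr" using interior_sides(2)[OF xi] by blast
  have r1: "r \<in> {1..n}" using lr unfolding leftaff_def by blast
  show ?thesis
  proof (cases "x \<in> EE")
    case False
    obtain a b where c: "consE a b" and ab: "a \<le> x" "x < b" using gap_right[OF xI yr] by blast
    have "a \<in> EE" using c unfolding consE_def by blast
    then have ax: "a < x" using ab False by (cases "a = x") auto
    obtain rl where rl: "leftaff n I Pn x rl" "Tsum n (Pt a) (Pt b) (Suc rl) < x - a"
      using LA_gap[OF c ax] ab by fastforce
    obtain sr where sr: "rightaff n I Pn x sr" "x - a < Tsum n (Pt a) (Pt b) sr"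
      using RA_gap[OF c ab] by blast
    have "r = rl" using leftaff_uniq lr rl(1) by blast
    moreover have "s = sr" using rightaff_uniq rr sr(1) by blast
    ultimately have "Tsum n (Pt a) (Pt b) s \<le> Tsum n (Pt a) (Pt b) (Suc rl)"
      using Tsum_anti[OF gap_mono[OF c], of "Suc rl" s] rs by simp
    then show ?thesis using rl sr \<open>s = sr\<close> by simp
  next
    case True
    obtain a' b' where c1': "consE a' b'" and ab': "a' < x" "x \<le> b'" and bx: "b' = x"
      using gap_left[OF xI yl] True by blast
    have c1: "consE a' x" using c1' bx by simp
    obtain a b where c2': "consE a b" and ab: "a \<le> x" "x < b" and ax: "a = x"
      using gap_right[OF xI yr] True by blast
    have c2: "consE x b" using c2' ax by simp
    have mono1: "\<forall>j\<in>{1..n}. Pt a' j \<le> Pt x j" using gap_mono[OF c1] .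
    have mono2: "\<forall>j\<in>{1..n}. Pt x j \<le> Pt b j" using gap_mono[OF c2] .
    have sum1: "(\<Sum>j=1..n. Pt x j) - (\<Sum>j=1..n. Pt a' j) = x - a'" using gap_sum[OF c1] .
    obtain rl where rl: "leftaff n I Pn x rl" "Tsum n (Pt a') (Pt x) (Suc rl) < x - a'" "x - a' \<le> Tsum n (Pt a') (Pt x) rl"
      using LA_gap[OF c1 ab'(1)] by blast
    obtain sr where sr: "rightaff n I Pn x sr" "Tsum n (Pt x) (Pt b) (Suc sr) \<le> x - x" "x - x < Tsum n (Pt x) (Pt b) sr"
      using RA_gap[OF c2 _ ab(2)] by blast
    have "r = rl" using leftaff_uniq lr rl(1) by blast
    have "s = sr" using rightaff_uniq rr sr(1) by blast
    have rl1: "rl \<in> {1..n}" using rl(1) unfolding leftaff_def by blast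
    have sr1: "sr \<in> {1..n}" using sr(1) unfolding leftaff_def rightaff_def by blast
    obtain L1 U1 where LU1: "1 \<le> L1" "L1 \<le> U1" "U1 \<le> n"
      and F1: "\<forall>t\<in>{a'..x}. \<forall>j\<in>{1..n}. Pt t j = Pt a' j + (if L1 \<le> j \<and> j \<le> U1 then (t - a') / real (U1 - L1 + 1) else 0)"
      and B1: "\<forall>j\<in>{L1..U1}. Pt a' j = Pt a' L1"
      using Pt_gap[OF c1] by blast
    obtain L2 U2 where LU2: "1 \<le> L2" "L2 \<le> U2" "U2 \<le> n"
      and F2: "\<forall>t\<in>{x..b}. \<forall>j\<in>{1..n}. Pt t j = Pt x j + (if L2 \<le> j \<and> j \<le> U2 then (t - x) / real (U2 - L2 + 1) else 0)"
      using Pt_gap[OF c2] by blast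
    have xa': "x \<in> {a'..x}" using ab' by auto
    have bx': "b \<in> {x..b}" using ab by auto
    have D1: "Pt x j - Pt a' j = (if L1 \<le> j \<and> j \<le> U1 then (x - a') / real (U1 - L1 + 1) else 0)"
      if "j \<in> {1..n}" for j using F1[rule_format, OF xa' that] by simp
    have D2: "Pt b j - Pt x j = (if L2 \<le> j \<and> j \<le> U2 then (b - x) / real (U2 - L2 + 1) else 0)"
      if "j \<in> {1..n}" for j using F2[rule_format, OF bx' that] by simp
    define T1 where "T1 = Tsum n (Pt a') (Pt x)"
    define T2 where "T2 = Tsum n (Pt x) (Pt b)"
    have rlL: "rl = L1"
    proof -
      have st: "T1 rl = (Pt x rl - Pt a' rl) + T1 (Suc rl)" using Tsum_step[of rl n] rl1 by (simp add: T1_def)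
      have "Pt x rl - Pt a' rl > 0" using st rl(2,3) by (simp add: T1_def)
      then have inb: "L1 \<le> rl \<and> rl \<le> U1" using D1[OF rl1] by (cases "L1 \<le> rl \<and> rl \<le> U1") auto
      show ?thesis
      proof (rule ccontr)
        assume "rl \<noteq> L1"
        then have lt: "L1 < rl" using inb by simp
        have a1: "T1 rl \<le> T1 (Suc L1)" using Tsum_anti[OF mono1, of "Suc L1" rl] lt by (simp add: T1_def)
        have L1n: "L1 \<in> {1..n}" using LU1 by auto
        have a2: "T1 L1 = (Pt x L1 - Pt a' L1) + T1 (Suc L1)" using Tsum_step[of L1 n] LU1 by (simp add: T1_def)
        have a3: "Pt x L1 - Pt a' L1 > 0" using D1[OF L1n] LU1 ab' by simp
        have a4: "T1 L1 \<le> T1 1" using Tsum_anti[OF mono1, of 1 L1] LU1 by (simp add: T1_def)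
        have a5: "T1 1 = x - a'" using Tsum_1[OF sum1] by (simp add: T1_def)
        show False using a1 a2 a3 a4 a5 rl(3) by (simp add: T1_def)
      qed
    qed
    have srU: "sr = U2"
    proof -
      have st: "T2 sr = (Pt b sr - Pt x sr) + T2 (Suc sr)" using Tsum_step[of sr n] sr1 by (simp add: T2_def)
      have nn: "0 \<le> T2 (Suc sr)" using Tsum_nonneg[OF mono2, of "Suc sr"] by (simp add: T2_def)
      have "Pt b sr - Pt x sr > 0" using st sr(2,3) nn by (simp add: T2_def)
      then have inb: "L2 \<le> sr \<and> sr \<le> U2" using D2[OF sr1] by (cases "L2 \<le> sr \<and> sr \<le> U2") auto
      show ?thesis
      proof (rule ccontr)
        assume "sr \<noteq> U2"
        then have lt: "sr < U2" using inb by simp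
        have a1: "T2 U2 \<le> T2 (Suc sr)" using Tsum_anti[OF mono2, of "Suc sr" U2] lt by (simp add: T2_def)
        have U2n: "U2 \<in> {1..n}" using LU2 by auto
        have a2: "T2 U2 = (Pt b U2 - Pt x U2) + T2 (Suc U2)" using Tsum_step[of U2 n] LU2 by (simp add: T2_def)
        have a3: "Pt b U2 - Pt x U2 > 0" using D2[OF U2n] LU2 ab by simp
        have a4: "0 \<le> T2 (Suc U2)" using Tsum_nonneg[OF mono2, of "Suc U2"] by (simp add: T2_def)
        show False using a1 a2 a3 a4 sr(2) by (simp add: T2_def)
      qed
    qed
    have lt: "L1 < U2" using rs \<open>r = rl\<close> \<open>s = sr\<close> rlL srU by simp
    have PJ: "\<forall>j\<in>{L1..U2}. Pt x j = Pt x L1"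
      by (rule Pt_junction[OF xi c1 c2 LU1 F1 B1 LU2 F2 lt])
    have rs': "r = L1" "s = U2" using \<open>r = rl\<close> \<open>s = sr\<close> rlL srU by simp_all
    show ?thesis
    proof
      fix j assume j: "j \<in> {r..s}"
      have "Pt x j = Pt x L1" using PJ j rs' by blast
      then show "Pn x j = Pn x r" using True rs' unfolding Pn_def by simp
    qed
  qed
qed

lemma final: "n_system n I Pn \<and> (\<forall>t\<in>D. \<forall>j\<in>{1..n}. Pn t j = Pt t j)"
proof
  show "n_system n I Pn"
  proof (rule nsys_crit[OF Pn_os])
    fix x assume x: "x \<in> I" and "\<exists>y\<in>I. y < x"
    then obtain y where y: "y \<in> I" "y < x" by blast
    obtain a b where c: "consE a b" and ab: "a < x" "x \<le> b" using gap_left[OF x y] by blast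
    show "\<exists>r. leftaff n I Pn x r" using LA_gap[OF c ab] by blast
  next
    fix x assume x: "x \<in> I" and "\<exists>y\<in>I. x < y"
    then obtain y where y: "y \<in> I" "x < y" by blast
    obtain a b where c: "consE a b" and ab: "a \<le> x" "x < b" using gap_right[OF x y] by blast
    show "\<exists>r. rightaff n I Pn x r" using RA_gap[OF c ab] by blast
  next
    fix x r s assume "x \<in> interior I" "leftaff n I Pn x r" "rightaff n I Pn x s" "r < s"
    then show "\<forall>j\<in>{r..s}. Pn x j = Pn x r" by (rule J_Pn)
  qed
  show "\<forall>t\<in>D. \<forall>j\<in>{1..n}. Pn t j = Pt t j" using D_sub by (auto simp: Pn_def)
qed

end

theorem mainTheorem5:
  fixes n :: nat and I D :: "real set" and Pt :: "real \<Rightarrow> nat \<Rightarrow> real"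
  assumes "n \<ge> 2"
    and "is_interval I" and "I \<subseteq> {0..}" and "interior I \<noteq> {}"
    and "gen_n_system n I Pt"
    and "D \<subseteq> I" and "discrete_in D I"
  shows "\<exists>P. n_system n I P \<and> (\<forall>t\<in>D. \<forall>j\<in>{1..n}. P t j = Pt t j)"
proof -
  have gs: "gsetup n I D Pt"
    unfolding gsetup_def using assms(1,2,3,5,6,7) by blast
  show ?thesis using gsetup.final[OF gs] by blast
qed

end
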